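(* Under the standing assumptions, for all $z\in\mathbb C$: $\widehat U_2^{(0)}(z)=d^{(0)}(z)\,d^{(2)}(z)$ and $\widetilde U_2^{(1)}(z)=d^{(1)}(z)$; $\widehat U_2^{(2j)}(z)=\widehat U_2^{(2j-2)}(z)\,d^{(2j+2)}(z)$ for $1\le j\le n-1$; $\widetilde U_2^{(2j+1)}(z)=\widetilde U_2^{(2j-1)}(z)\,d^{(2j+1)}(z)$ for $1\le j\le n$. Consequently $\widehat U_2^{(2j)}=d^{(0)}d^{(2)}\cdots d^{(2j+2)}$ for $0\le j\le n-1$ and $\widetilde U_2^{(2j+1)}=d^{(1)}d^{(3)}\cdots d^{(2j+1)}$ for $0\le j\le n$.
   Context: Let $q,n\in\mathbb N$ and let $a<b$ be real numbers. All matrices are complex; $I_q$, $0_q$ are the $q\times q$ identity and zero matrices; for a matrix-valued function $F$, $F^*(\bar z)$ means $(F(\bar z))^*$. Let $s_0,\dots,s_{2n+1}$ be Hermitian $q\times q$ matrices and set $\widehat s_j:=-ab\,s_j+(a+b)s_{j+1}-s_{j+2}$. Define $H_{2,j}:=(\widehat s_{l+k})_{l,k=0}^{j}$ and $K_{1,j}:=(bs_{l+k}-s_{l+k+1})_{l,k=0}^{j}$. Standing assumption: $H_{2,n-1}$ and $K_{1,n}$ are positive definite. Let $T_0:=0_q$ and, for $j\ge1$, let $T_j$ be the $(j+1)\times(j+1)$ block matrix (blocks $q\times q$) with $I_q$ in block positions $(l+1,l)$, $l=0,\dots,j-1$, and $0_q$ elsewhere; $R_j(z):=(I_{(j+1)q}-zT_j)^{-1}$;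 $v_j:=\mathrm{col}(I_q,0_q,\dots,0_q)\in\mathbb C^{(j+1)q\times q}$. Let $u_{2,0}:=-(a+b)s_0+s_1$, $u_{2,j}:=\mathrm{col}(u_{2,0},-\widehat s_0,\dots,-\widehat s_{j-1})$, $\widetilde u_{1,j}:=\mathrm{col}(s_0,s_1-bs_0,\dots,s_j-bs_{j-1})$; for $j\ge1$, $Y_{2,j}:=\mathrm{col}(\widehat s_j,\dots,\widehat s_{2j-1})$, $\widetilde Y_{1,j}:=\mathrm{col}(bs_j-s_{j+1},\dots,bs_{2j-1}-s_{2j})$. Schur complements: $\widehat H_{2,0}:=\widehat s_0$, $\widehat H_{2,j}:=\widehat s_{2j}-Y_{2,j}^*H_{2,j-1}^{-1}Y_{2,j}$; $\widehat K_{1,0}:=bs_0-s_1$, $\widehat K_{1,j}:=bs_{2j}-s_{2j+1}-\widetilde Y_{1,j}^*K_{1,j-1}^{-1}\widetilde Y_{1,j}$ ($j\ge1$). Polynomials: $P_{2,0}:=I_q$, $Q_{2,0}(z):=-(u_{2,0}+zs_0)$, $\Gamma_{1,0}:=I_q$, $\Theta_{1,0}:=s_0$; for $j\ge1$: $P_{2,j}(z):=(-Y_{2,j}^*H_{2,j-1}^{-1},I_q)R_j(z)v_j$, $Q_{2,j}(z):=-(-Y_{2,j}^*H_{2,j-1}^{-1},I_q)R_j(z)(u_{2,j}+zv_js_0)$, $\Gamma_{1,j}(z):=(-\widetilde Y_{1,j}^*K_{1,j-1}^{-1},I_q)R_j(z)v_j$, $\Theta_{1,j}(z):=(-\widetilde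 Y_{1,j}^*K_{1,j-1}^{-1},I_q)R_j(z)\widetilde u_{1,j}$. Auxiliary matrices: for $0\le j\le n-1$, $\widehat U_2^{(2j)}(z)=\begin{pmatrix}\widehat\alpha&\widehat\beta\\ \widehat\gamma&\widehat\delta\end{pmatrix}$ with $\widehat\alpha=I_q-(z-a)(u_{2,j}^*+zs_0v_j^* )R_j^*(\bar z)H_{2,j}^{-1}R_j(a)v_j$, $\widehat\beta=(z-a)\big(s_0+(u_{2,j}^*+zs_0v_j^* )R_j^*(\bar z)H_{2,j}^{-1}R_j(a)(u_{2,j}+av_js_0)\big)$, $\widehat\gamma=-(z-a)v_j^*R_j^*(\bar z)H_{2,j}^{-1}R_j(a)v_j$, $\widehat\delta=I_q+(z-a)v_j^*R_j^*(\bar z)H_{2,j}^{-1}R_j(a)(u_{2,j}+av_js_0)$. For $0\le j\le n$, $\widetilde U_2^{(2j+1)}(z)=\begin{pmatrix}I_q-(z-a)\widetilde u_{1,j}^*R_j^*(\bar z)K_{1,j}^{-1}R_j(a)v_j & (z-a)\widetilde u_{1,j}^*R_j^*(\bar z)K_{1,j}^{-1}R_j(a)\widetilde u_{1,j}\\ -(z-a)v_j^*R_j^*(\bar z)K_{1,j}^{-1}R_j(a)v_j & I_q+(z-a)v_j^*R_j^*(\bar z)K_{1,j}^{-1}R_j(a)\widetilde u_{1,j}\end{pmatrix}$. Blaschke–Potapov factors: $d^{(0)}(z):=\begin{pmatrix}I_q&(z-a)s_0\\0_q&I_q\end{pmatrix}$; for $0\le j\le n-1$, $d^{(2j+2)}(z):=\begin{pmatrix}I_q+(z-a)Q_{2,j}^*(a)\widehat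 H_{2,j}^{-1}P_{2,j}(a) & (z-a)Q_{2,j}^*(a)\widehat H_{2,j}^{-1}Q_{2,j}(a)\\ -(z-a)P_{2,j}^*(a)\widehat H_{2,j}^{-1}P_{2,j}(a) & I_q-(z-a)P_{2,j}^*(a)\widehat H_{2,j}^{-1}Q_{2,j}(a)\end{pmatrix}$; for $0\le j\le n$, $d^{(2j+1)}(z):=\begin{pmatrix}I_q-(z-a)\Theta_{1,j}^*(a)\widehat K_{1,j}^{-1}\Gamma_{1,j}(a) & (z-a)\Theta_{1,j}^*(a)\widehat K_{1,j}^{-1}\Theta_{1,j}(a)\\ -(z-a)\Gamma_{1,j}^*(a)\widehat K_{1,j}^{-1}\Gamma_{1,j}(a) & I_q+(z-a)\Gamma_{1,j}^*(a)\widehat K_{1,j}^{-1}\Theta_{1,j}(a)\end{pmatrix}$. *)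

theory Defs
  imports Complex_Main "Jordan_Normal_Form.Matrix"
begin

definition adj_m :: "complex mat \<Rightarrow> complex mat" where
  "adj_m A = transpose_mat (map_mat cnj A)"

text \<open>Inverse of a square matrix (meaningful when it is invertible).\<close>
definition minv :: "complex mat \<Rightarrow> complex mat" where
  "minv A = (SOME B. B \<in> carrier_mat (dim_row A) (dim_row A) \<and>
                      A * B = 1\<^sub>m (dim_row A) \<and> B * A = 1\<^sub>m (dim_row A))"

definition pos_def_mat :: "nat \<Rightarrow> complex mat \<Rightarrow> bool" where
  "pos_def_mat N A \<longleftrightarrow> A \<in> carrier_mat N N \<and> adj_m A = A \<and>
     (\<forall>v \<in> carrier_vec N. v \<noteq> 0\<^sub>v N \<longrightarrow>
        (let c = (\<Sum>i<N. cnj (v $ i) * (A *\<^sub>v v) $ i) in Im c = 0 \<and> Re c > 0))"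

definition blockmat :: "nat \<Rightarrow> nat \<Rightarrow> nat \<Rightarrow> (nat \<Rightarrow> nat \<Rightarrow> complex mat) \<Rightarrow> complex mat" where
  "blockmat q m p B = mat (m * q) (p * q) (\<lambda>(i, k). B (i div q) (k div q) $$ (i mod q, k mod q))"

definition hcat :: "complex mat \<Rightarrow> complex mat \<Rightarrow> complex mat" where
  "hcat A B = four_block_mat A B (0\<^sub>m 0 (dim_col A)) (0\<^sub>m 0 (dim_col B))"

fun mprod :: "(nat \<Rightarrow> complex mat) \<Rightarrow> nat \<Rightarrow> complex mat" where
  "mprod f 0 = f 0"
| "mprod f (Suc k) = mprod f k * f (Suc k)"

definition shat :: "(nat \<Rightarrow> complex mat) \<Rightarrow> real \<Rightarrow> real \<Rightarrow> nat \<Rightarrow> complex mat" where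
  "shat s a b j = complex_of_real (- (a * b)) \<cdot>\<^sub>m s j + complex_of_real (a + b) \<cdot>\<^sub>m s (j + 1) - s (j + 2)"

definition H2 :: "nat \<Rightarrow> (nat \<Rightarrow> complex mat) \<Rightarrow> real \<Rightarrow> real \<Rightarrow> nat \<Rightarrow> complex mat" where
  "H2 q s a b j = blockmat q (j + 1) (j + 1) (\<lambda>l k. shat s a b (l + k))"

definition K1 :: "nat \<Rightarrow> (nat \<Rightarrow> complex mat) \<Rightarrow> real \<Rightarrow> nat \<Rightarrow> complex mat" where
  "K1 q s b j = blockmat q (j + 1) (j + 1) (\<lambda>l k. complex_of_real b \<cdot>\<^sub>m s (l + k) - s (l + k + 1))"

definition Tm :: "nat \<Rightarrow> nat \<Rightarrow> complex mat" where
  "Tm q j = blockmat q (j + 1) (j + 1) (\<lambda>l k. if l = k + 1 then 1\<^sub>m q else 0\<^sub>m q q)"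

definition Rm :: "nat \<Rightarrow> nat \<Rightarrow> complex \<Rightarrow> complex mat" where
  "Rm q j z = minv (1\<^sub>m ((j + 1) * q) - z \<cdot>\<^sub>m Tm q j)"

definition vm :: "nat \<Rightarrow> nat \<Rightarrow> complex mat" where
  "vm q j = blockmat q (j + 1) 1 (\<lambda>l k. if l = 0 then 1\<^sub>m q else 0\<^sub>m q q)"

definition u20 :: "(nat \<Rightarrow> complex mat) \<Rightarrow> real \<Rightarrow> real \<Rightarrow> complex mat" where
  "u20 s a b = complex_of_real (- (a + b)) \<cdot>\<^sub>m s 0 + s 1"

definition u2 :: "nat \<Rightarrow> (nat \<Rightarrow> complex mat) \<Rightarrow> real \<Rightarrow> real \<Rightarrow> nat \<Rightarrow> complex mat" where
  "u2 q s a b j = blockmat q (j + 1) 1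
     (\<lambda>l k. if l = 0 then u20 s a b else - shat s a b (l - 1))"

definition ut1 :: "nat \<Rightarrow> (nat \<Rightarrow> complex mat) \<Rightarrow> real \<Rightarrow> nat \<Rightarrow> complex mat" where
  "ut1 q s b j = blockmat q (j + 1) 1
     (\<lambda>l k. if l = 0 then s 0 else s l - complex_of_real b \<cdot>\<^sub>m s (l - 1))"

definition Y2 :: "nat \<Rightarrow> (nat \<Rightarrow> complex mat) \<Rightarrow> real \<Rightarrow> real \<Rightarrow> nat \<Rightarrow> complex mat" where
  "Y2 q s a b j = blockmat q j 1 (\<lambda>l k. shat s a b (j + l))"

definition Yt1 :: "nat \<Rightarrow> (nat \<Rightarrow> complex mat) \<Rightarrow> real \<Rightarrow> nat \<Rightarrow> complex mat" where
  "Yt1 q s b j = blockmat q j 1 (\<lambda>l k. complex_of_real b \<cdot>\<^sub>m s (j + l) - s (j + l + 1))"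

definition H2hat :: "nat \<Rightarrow> (nat \<Rightarrow> complex mat) \<Rightarrow> real \<Rightarrow> real \<Rightarrow> nat \<Rightarrow> complex mat" where
  "H2hat q s a b j = (if j = 0 then shat s a b 0
     else shat s a b (2 * j) - adj_m (Y2 q s a b j) * minv (H2 q s a b (j - 1)) * Y2 q s a b j)"

definition K1hat :: "nat \<Rightarrow> (nat \<Rightarrow> complex mat) \<Rightarrow> real \<Rightarrow> nat \<Rightarrow> complex mat" where
  "K1hat q s b j = (if j = 0 then complex_of_real b \<cdot>\<^sub>m s 0 - s 1
     else complex_of_real b \<cdot>\<^sub>m s (2 * j) - s (2 * j + 1)
          - adj_m (Yt1 q s b j) * minv (K1 q s b (j - 1)) * Yt1 q s b j)"

definition row2 :: "nat \<Rightarrow> (nat \<Rightarrow> complex mat) \<Rightarrow> real \<Rightarrow> real \<Rightarrow> nat \<Rightarrow> complex mat" where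
  "row2 q s a b j = hcat (- (adj_m (Y2 q s a b j) * minv (H2 q s a b (j - 1)))) (1\<^sub>m q)"

definition row1 :: "nat \<Rightarrow> (nat \<Rightarrow> complex mat) \<Rightarrow> real \<Rightarrow> nat \<Rightarrow> complex mat" where
  "row1 q s b j = hcat (- (adj_m (Yt1 q s b j) * minv (K1 q s b (j - 1)))) (1\<^sub>m q)"

definition P2 :: "nat \<Rightarrow> (nat \<Rightarrow> complex mat) \<Rightarrow> real \<Rightarrow> real \<Rightarrow> nat \<Rightarrow> complex \<Rightarrow> complex mat" where
  "P2 q s a b j z = (if j = 0 then 1\<^sub>m q else row2 q s a b j * Rm q j z * vm q j)"

definition Q2 :: "nat \<Rightarrow> (nat \<Rightarrow> complex mat) \<Rightarrow> real \<Rightarrow> real \<Rightarrow> nat \<Rightarrow> complex \<Rightarrow> complex mat" where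
  "Q2 q s a b j z = (if j = 0 then - (u20 s a b + z \<cdot>\<^sub>m s 0)
     else - (row2 q s a b j * Rm q j z * (u2 q s a b j + z \<cdot>\<^sub>m (vm q j * s 0))))"

definition Gam1 :: "nat \<Rightarrow> (nat \<Rightarrow> complex mat) \<Rightarrow> real \<Rightarrow> nat \<Rightarrow> complex \<Rightarrow> complex mat" where
  "Gam1 q s b j z = (if j = 0 then 1\<^sub>m q else row1 q s b j * Rm q j z * vm q j)"

definition Theta1 :: "nat \<Rightarrow> (nat \<Rightarrow> complex mat) \<Rightarrow> real \<Rightarrow> nat \<Rightarrow> complex \<Rightarrow> complex mat" where
  "Theta1 q s b j z = (if j = 0 then s 0 else row1 q s b j * Rm q j z * ut1 q s b j)"

text \<open>Auxiliary matrices hat U_2^{(2j)} and tilde U_2^{(2j+1)}.\<close>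
definition U2hat :: "nat \<Rightarrow> (nat \<Rightarrow> complex mat) \<Rightarrow> real \<Rightarrow> real \<Rightarrow> nat \<Rightarrow> complex \<Rightarrow> complex mat" where
  "U2hat q s a b j z =
    (let za = z - complex_of_real a;
         Ra = Rm q j (complex_of_real a);
         Rs = adj_m (Rm q j (cnj z));
         Hi = minv (H2 q s a b j);
         v = vm q j; u = u2 q s a b j;
         w = adj_m u + z \<cdot>\<^sub>m (s 0 * adj_m v);
         ua = u + complex_of_real a \<cdot>\<^sub>m (v * s 0)
     in four_block_mat
          (1\<^sub>m q - za \<cdot>\<^sub>m (w * Rs * Hi * Ra * v))
          (za \<cdot>\<^sub>m (s 0 + w * Rs * Hi * Ra * ua))
          (- (za \<cdot>\<^sub>m (adj_m v * Rs * Hi * Ra * v)))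
          (1\<^sub>m q + za \<cdot>\<^sub>m (adj_m v * Rs * Hi * Ra * ua)))"

definition U2til :: "nat \<Rightarrow> (nat \<Rightarrow> complex mat) \<Rightarrow> real \<Rightarrow> real \<Rightarrow> nat \<Rightarrow> complex \<Rightarrow> complex mat" where
  "U2til q s a b j z =
    (let za = z - complex_of_real a;
         Ra = Rm q j (complex_of_real a);
         Rs = adj_m (Rm q j (cnj z));
         Ki = minv (K1 q s b j);
         v = vm q j; u = ut1 q s b j
     in four_block_mat
          (1\<^sub>m q - za \<cdot>\<^sub>m (adj_m u * Rs * Ki * Ra * v))
          (za \<cdot>\<^sub>m (adj_m u * Rs * Ki * Ra * u))
          (- (za \<cdot>\<^sub>m (adj_m v * Rs * Ki * Ra * v)))
          (1\<^sub>m q + za \<cdot>\<^sub>m (adj_m v * Rs * Ki * Ra * u)))"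

text \<open>Blaschke--Potapov factors: d0 = d^{(0)}, deven j = d^{(2j+2)}, dodd j = d^{(2j+1)}.\<close>
definition d0 :: "nat \<Rightarrow> (nat \<Rightarrow> complex mat) \<Rightarrow> real \<Rightarrow> complex \<Rightarrow> complex mat" where
  "d0 q s a z = four_block_mat (1\<^sub>m q) ((z - complex_of_real a) \<cdot>\<^sub>m s 0) (0\<^sub>m q q) (1\<^sub>m q)"

definition deven :: "nat \<Rightarrow> (nat \<Rightarrow> complex mat) \<Rightarrow> real \<Rightarrow> real \<Rightarrow> nat \<Rightarrow> complex \<Rightarrow> complex mat" where
  "deven q s a b j z =
    (let za = z - complex_of_real a;
         P = P2 q s a b j (complex_of_real a); Q = Q2 q s a b j (complex_of_real a);
         Hi = minv (H2hat q s a b j)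
     in four_block_mat
          (1\<^sub>m q + za \<cdot>\<^sub>m (adj_m Q * Hi * P))
          (za \<cdot>\<^sub>m (adj_m Q * Hi * Q))
          (- (za \<cdot>\<^sub>m (adj_m P * Hi * P)))
          (1\<^sub>m q - za \<cdot>\<^sub>m (adj_m P * Hi * Q)))"

definition dodd :: "nat \<Rightarrow> (nat \<Rightarrow> complex mat) \<Rightarrow> real \<Rightarrow> real \<Rightarrow> nat \<Rightarrow> complex \<Rightarrow> complex mat" where
  "dodd q s a b j z =
    (let za = z - complex_of_real a;
         G = Gam1 q s b j (complex_of_real a); Th = Theta1 q s b j (complex_of_real a);
         Ki = minv (K1hat q s b j)
     in four_block_mat
          (1\<^sub>m q - za \<cdot>\<^sub>m (adj_m Th * Ki * G))
          (za \<cdot>\<^sub>m (adj_m Th * Ki * Th))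
          (- (za \<cdot>\<^sub>m (adj_m G * Ki * G)))
          (1\<^sub>m q + za \<cdot>\<^sub>m (adj_m G * Ki * Th)))"

end

theory Submission
  imports Defs "Jordan_Normal_Form.Determinant"
begin


lemma adj_dims[simp]: "dim_row (adj_m A) = dim_col A" "dim_col (adj_m A) = dim_row A"
  by (auto simp: adj_m_def)

lemma adj_index[simp]: "i < dim_col A \<Longrightarrow> k < dim_row A \<Longrightarrow> adj_m A $$ (i,k) = cnj (A $$ (k,i))"
  by (auto simp: adj_m_def)

lemma adj_carrier[simp,intro]: "A \<in> carrier_mat n m \<Longrightarrow> adj_m A \<in> carrier_mat m n"
  unfolding carrier_mat_def adj_m_def by simp

lemma adj_mult: assumes "A \<in> carrier_mat n m" "B \<in> carrier_mat m p"
  shows "adj_m (A * B) = adj_m B * adj_m A"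
  apply (rule eq_matI)
  using assms by (auto simp: scalar_prod_def mult.commute)

lemma adj_add: assumes "A \<in> carrier_mat n m" "B \<in> carrier_mat n m"
  shows "adj_m (A + B) = adj_m A + adj_m B"
  by (rule eq_matI, insert assms, auto)

lemma adj_minus: assumes "A \<in> carrier_mat n m" "B \<in> carrier_mat n m"
  shows "adj_m (A - B) = adj_m A - adj_m B"
  by (rule eq_matI, insert assms, auto)

lemma adj_uminus: "adj_m (- A) = - adj_m A"
  by (rule eq_matI, auto)

lemma adj_smult: "adj_m (c \<cdot>\<^sub>m A) = cnj c \<cdot>\<^sub>m adj_m A"
  by (rule eq_matI, auto)

lemma adj_adj[simp]: "adj_m (adj_m A) = A"
  by (rule eq_matI, auto)

lemma adj_one[simp]: "adj_m (1\<^sub>m n) = 1\<^sub>m n"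
  by (rule eq_matI, auto)

lemma adj_zero[simp]: "adj_m (0\<^sub>m n m) = 0\<^sub>m m n"
  by (rule eq_matI, auto)

lemma det_inv_exists: assumes A: "(A::complex mat) \<in> carrier_mat n n" and d: "det A \<noteq> 0"
  shows "\<exists>B. B \<in> carrier_mat n n \<and> A * B = 1\<^sub>m n \<and> B * A = 1\<^sub>m n"
proof -
  from det_non_zero_imp_unit[OF A d, of "()"]
  show ?thesis unfolding Units_def ring_mat_def by auto
qed

lemma minv_props: assumes A: "(A::complex mat) \<in> carrier_mat n n" and d: "det A \<noteq> 0"
  shows "minv A \<in> carrier_mat n n" "A * minv A = 1\<^sub>m n" "minv A * A = 1\<^sub>m n"
proof -
  have dr: "dim_row A = n" using A by auto
  have "\<exists>B. B \<in> carrier_mat (dim_row A) (dim_row A) \<and> A * B = 1\<^sub>m (dim_row A) \<and> B * A = 1\<^sub>m (dim_row A)"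
    using det_inv_exists[OF A d] dr by simp
  from someI_ex[OF this] show "minv A \<in> carrier_mat n n" "A * minv A = 1\<^sub>m n" "minv A * A = 1\<^sub>m n"
    unfolding minv_def dr by auto
qed

lemma right_inv_det: assumes A: "(A::complex mat) \<in> carrier_mat n n" and B: "B \<in> carrier_mat n n"
  and AB: "A * B = 1\<^sub>m n" shows "det A \<noteq> 0"
  using det_mult[OF A B] AB by auto

lemma minv_unique: assumes A: "(A::complex mat) \<in> carrier_mat n n" and B: "B \<in> carrier_mat n n"
  and AB: "A * B = 1\<^sub>m n" shows "minv A = B"
proof -
  have d: "det A \<noteq> 0" by (rule right_inv_det[OF A B AB])
  note m = minv_props[OF A d]
  have "minv A = minv A * (A * B)" using AB m by simp
  also have "\<dots> = (minv A * A) * B" using assoc_mult_mat[OF m(1) A B] by simp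
  also have "\<dots> = B" using m B by simp
  finally show ?thesis .
qed

lemma minv_herm: assumes A: "(A::complex mat) \<in> carrier_mat n n" and d: "det A \<noteq> 0" and h: "adj_m A = A"
  shows "adj_m (minv A) = minv A"
proof -
  note m = minv_props[OF A d]
  have "A * adj_m (minv A) = adj_m (minv A * A)"
    using adj_mult[OF m(1) A] h by simp
  also have "\<dots> = 1\<^sub>m n" using m by simp
  finally have "minv A = adj_m (minv A)" using minv_unique[OF A _ ] m(1) by auto
  then show ?thesis by simp
qed

lemma qq_closed:
  "A \<in> carrier_mat q q \<Longrightarrow> B \<in> carrier_mat q q \<Longrightarrow> A * B \<in> carrier_mat q q"
  "A \<in> carrier_mat q q \<Longrightarrow> B \<in> carrier_mat q q \<Longrightarrow> A + B \<in> carrier_mat q q"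
  "A \<in> carrier_mat q q \<Longrightarrow> B \<in> carrier_mat q q \<Longrightarrow> A - B \<in> carrier_mat q q"
  "A \<in> carrier_mat q q \<Longrightarrow> - A \<in> carrier_mat q q"
  "1\<^sub>m q \<in> carrier_mat q q"
  by auto

lemma ainv_mat: assumes "A \<in> carrier_mat q q"
  shows "a_inv (ring_mat TYPE(complex) q ()) A = - A"
proof -
  interpret R: ring "ring_mat TYPE(complex) q ()" by (rule ring_mat)
  have "A \<oplus>\<^bsub>ring_mat TYPE(complex) q ()\<^esub> (- A) = \<zero>\<^bsub>ring_mat TYPE(complex) q ()\<^esub>"
    using assms by (simp add: ring_mat_simps minus_add_uminus_mat[symmetric])
  then show ?thesis using assms
    by (metis R.add.inv_closed R.add.inv_comm R.add.inv_equality R.minus_equality ring_mat_simps(5) uminus_carrier_mat)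
qed

lemma to_ring:
  fixes A B :: "complex mat"
  shows "A \<in> carrier_mat q q \<Longrightarrow> B \<in> carrier_mat q q \<Longrightarrow> A \<ominus>\<^bsub>ring_mat TYPE(complex) q ()\<^esub> B = A - B"
  and "A \<in> carrier_mat q q \<Longrightarrow> \<ominus>\<^bsub>ring_mat TYPE(complex) q ()\<^esub> A = - A"
proof -
  interpret R: ring "ring_mat TYPE(complex) q ()" by (rule ring_mat)
  show "A \<in> carrier_mat q q \<Longrightarrow> B \<in> carrier_mat q q \<Longrightarrow> A \<ominus>\<^bsub>ring_mat TYPE(complex) q ()\<^esub> B = A - B"
    by (simp add: R.minus_eq ainv_mat ring_mat_simps minus_add_uminus_mat)
qed (simp_all add: ainv_mat ring_mat_simps)


lemma massoc: "dim_col A = dim_row B \<Longrightarrow> dim_col B = dim_row C \<Longrightarrow> (A::complex mat) * B * C = A * (B * C)"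
  by (rule assoc_mult_mat[of A "dim_row A" "dim_col A" B "dim_col B" C "dim_col C"], auto)

lemma mdistl: "dim_col A = dim_row B \<Longrightarrow> dim_row B = dim_row C \<Longrightarrow> dim_col B = dim_col C \<Longrightarrow>
  (A::complex mat) * (B + C) = A * B + A * C"
  by (rule mult_add_distrib_mat[of A "dim_row A" "dim_col A" B "dim_col B" C], auto)

lemma mdistr: "dim_col A = dim_row C \<Longrightarrow> dim_row A = dim_row B \<Longrightarrow> dim_col A = dim_col B \<Longrightarrow>
  ((A::complex mat) + B) * C = A * C + B * C"
  by (rule add_mult_distrib_mat[of A "dim_row A" "dim_col A" B C "dim_col C"], auto)

lemma mdistl_minus: "dim_col A = dim_row B \<Longrightarrow> dim_row B = dim_row C \<Longrightarrow> dim_col B = dim_col C \<Longrightarrow>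
  (A::complex mat) * (B - C) = A * B - A * C"
  by (rule mult_minus_distrib_mat[of A "dim_row A" "dim_col A" B "dim_col B" C], auto)

lemma mdistr_minus: "dim_col A = dim_row C \<Longrightarrow> dim_row A = dim_row B \<Longrightarrow> dim_col A = dim_col B \<Longrightarrow>
  ((A::complex mat) - B) * C = A * C - B * C"
  by (rule minus_mult_distrib_mat[of A "dim_row A" "dim_col A" B C "dim_col C"], auto)

lemma msmult_r: "dim_col A = dim_row B \<Longrightarrow> (A::complex mat) * (c \<cdot>\<^sub>m B) = c \<cdot>\<^sub>m (A * B)"
  by (rule mult_smult_distrib[of A "dim_row A" "dim_col A" B "dim_col B"], auto)

lemma msmult_l: "dim_col A = dim_row B \<Longrightarrow> (c \<cdot>\<^sub>m (A::complex mat)) * B = c \<cdot>\<^sub>m (A * B)"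
  by (rule mult_smult_assoc_mat[of A "dim_row A" "dim_col A" B "dim_col B"], auto)

lemma adj_mult_d: "dim_col A = dim_row B \<Longrightarrow> adj_m (A * B) = adj_m B * adj_m A"
  by (rule adj_mult[of A "dim_row A" "dim_col A" B "dim_col B"], auto)

lemma adj_add_d: "dim_row A = dim_row B \<Longrightarrow> dim_col A = dim_col B \<Longrightarrow> adj_m (A + B) = adj_m A + adj_m B"
  by (rule adj_add[of A "dim_row A" "dim_col A" B], auto)

lemma adj_minus_d: "dim_row A = dim_row B \<Longrightarrow> dim_col A = dim_col B \<Longrightarrow> adj_m (A - B) = adj_m A - adj_m B"
  by (rule adj_minus[of A "dim_row A" "dim_col A" B], auto)

lemma mone_l: "dim_row A = n \<Longrightarrow> 1\<^sub>m n * (A::complex mat) = A" by simp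
lemma mone_r: "dim_col A = n \<Longrightarrow> (A::complex mat) * 1\<^sub>m n = A" by simp

lemma mzero_r: "dim_col A = n \<Longrightarrow> (A::complex mat) * 0\<^sub>m n m = 0\<^sub>m (dim_row A) m"
  by (rule eq_matI, auto simp: scalar_prod_def)
lemma mzero_l: "dim_row A = n \<Longrightarrow> 0\<^sub>m m n * (A::complex mat) = 0\<^sub>m m (dim_col A)"
  by (rule eq_matI, auto simp: scalar_prod_def)

lemmas malg = massoc mdistl mdistr mdistl_minus mdistr_minus msmult_r msmult_l
  adj_mult_d adj_add_d adj_minus_d adj_uminus adj_smult


lemma minus_eq_imp: assumes "X - Y = Z" "X \<in> carrier_mat n m" "Y \<in> carrier_mat n m"
  shows "X = Z + (Y::complex mat)"
proof (rule eq_matI)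
  fix i j assume ij: "i < dim_row (Z + Y)" "j < dim_col (Z + Y)"
  have "(X - Y) $$ (i,j) = Z $$ (i,j)" using assms by simp
  then show "X $$ (i,j) = (Z + Y) $$ (i,j)" using ij assms by auto
qed (use assms in auto)

lemma cancel1: assumes "D - B = 0\<^sub>m n m" "A \<in> carrier_mat n m" "B \<in> carrier_mat n m" "D \<in> carrier_mat n m"
  shows "A + B - D = (A::complex mat)"
proof (rule eq_matI)
  fix i j assume ij: "i < dim_row A" "j < dim_col A"
  have "(D - B) $$ (i,j) = 0\<^sub>m n m $$ (i,j)" by (simp only: assms(1))
  then have "D $$ (i,j) - B $$ (i,j) = 0" using assms(2-4) ij by simp
  then have "B $$ (i,j) = D $$ (i,j)" by simp
  then show "(A + B - D) $$ (i,j) = A $$ (i,j)" using ij assms by auto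
qed (use assms in auto)


lemma lin2: assumes "P - c \<cdot>\<^sub>m X = A" "P - d \<cdot>\<^sub>m X = B" "P \<in> carrier_mat n m" "X \<in> carrier_mat n m"
  shows "B - A = (c - d) \<cdot>\<^sub>m (X::complex mat)"
proof (rule eq_matI)
  fix i j assume ij: "i < dim_row ((c - d) \<cdot>\<^sub>m X)" "j < dim_col ((c - d) \<cdot>\<^sub>m X)"
  have "(P - c \<cdot>\<^sub>m X) $$ (i,j) = A $$ (i,j)" by (simp only: assms(1))
  moreover have "(P - d \<cdot>\<^sub>m X) $$ (i,j) = B $$ (i,j)" by (simp only: assms(2))
  moreover have cA: "A \<in> carrier_mat n m" unfolding assms(1)[symmetric] using assms(3,4) by auto
  moreover have cB: "B \<in> carrier_mat n m" unfolding assms(2)[symmetric] using assms(3,4) by auto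
  ultimately show "(B - A) $$ (i,j) = ((c - d) \<cdot>\<^sub>m X) $$ (i,j)" using ij assms(3,4)
    by (auto simp: algebra_simps)
qed (use assms in \<open>auto\<close>)

definition Uf :: "nat \<Rightarrow> complex \<Rightarrow> complex mat \<Rightarrow> complex mat \<Rightarrow> complex mat \<Rightarrow> complex mat \<Rightarrow> complex mat \<Rightarrow> complex mat" where
  "Uf q za u v Rs Ki Ra = four_block_mat
          (1\<^sub>m q - za \<cdot>\<^sub>m (adj_m u * Rs * Ki * Ra * v))
          (za \<cdot>\<^sub>m (adj_m u * Rs * Ki * Ra * u))
          (- (za \<cdot>\<^sub>m (adj_m v * Rs * Ki * Ra * v)))
          (1\<^sub>m q + za \<cdot>\<^sub>m (adj_m v * Rs * Ki * Ra * u))"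

definition Df :: "nat \<Rightarrow> complex \<Rightarrow> complex mat \<Rightarrow> complex mat \<Rightarrow> complex mat \<Rightarrow> complex mat" where
  "Df q za X Y M = four_block_mat
          (1\<^sub>m q - za \<cdot>\<^sub>m (adj_m X * M * Y))
          (za \<cdot>\<^sub>m (adj_m X * M * X))
          (- (za \<cdot>\<^sub>m (adj_m Y * M * Y)))
          (1\<^sub>m q + za \<cdot>\<^sub>m (adj_m Y * M * X))"

lemma four_step: fixes huv huu hvu hvv bu bv M Bu Bv :: "complex mat"
  assumes c: "huv \<in> carrier_mat q q" "huu \<in> carrier_mat q q" "hvu \<in> carrier_mat q q" "hvv \<in> carrier_mat q q"
    "bu \<in> carrier_mat q q" "bv \<in> carrier_mat q q"
   "M \<in> carrier_mat q q" "Bu \<in> carrier_mat q q" "Bv \<in> carrier_mat q q"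
  shows "four_block_mat (1\<^sub>m q - (huv + (bu + huu*bv - huv*bu)*M*Bv)) (huu + (bu + huu*bv - huv*bu)*M*Bu)
     (-(hvv + (bv + hvu*bv - hvv*bu)*M*Bv)) (1\<^sub>m q + (hvu + (bv + hvu*bv - hvv*bu)*M*Bu))
   = four_block_mat (1\<^sub>m q - huv) huu (-hvv) (1\<^sub>m q + hvu) *
     four_block_mat (1\<^sub>m q - bu*M*Bv) (bu*M*Bu) (-(bv*M*Bv)) (1\<^sub>m q + bv*M*Bu)"
proof -
  interpret R: ring "ring_mat TYPE(complex) q ()" by (rule ring_mat)
  let ?R = "ring_mat TYPE(complex) q ()"
  have cR: "huv \<in> carrier ?R" "huu \<in> carrier ?R" "hvu \<in> carrier ?R" "hvv \<in> carrier ?R" "bu \<in> carrier ?R" "bv \<in> carrier ?R"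
   "M \<in> carrier ?R" "Bu \<in> carrier ?R" "Bv \<in> carrier ?R" using c by (simp_all add: ring_mat_simps)
  note rs = R.r_distr R.l_distr R.m_assoc R.a_ac R.minus_eq R.r_minus R.l_minus R.minus_add R.r_one R.l_one R.minus_minus
  have e11: "(\<one>\<^bsub>?R\<^esub> \<ominus>\<^bsub>?R\<^esub> huv) \<otimes>\<^bsub>?R\<^esub> (\<one>\<^bsub>?R\<^esub> \<ominus>\<^bsub>?R\<^esub> bu \<otimes>\<^bsub>?R\<^esub> M \<otimes>\<^bsub>?R\<^esub> Bv) \<oplus>\<^bsub>?R\<^esub> huu \<otimes>\<^bsub>?R\<^esub> (\<ominus>\<^bsub>?R\<^esub> (bv \<otimes>\<^bsub>?R\<^esub> M \<otimes>\<^bsub>?R\<^esub> Bv)) =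
     \<one>\<^bsub>?R\<^esub> \<ominus>\<^bsub>?R\<^esub> (huv \<oplus>\<^bsub>?R\<^esub> (bu \<oplus>\<^bsub>?R\<^esub> huu \<otimes>\<^bsub>?R\<^esub> bv \<ominus>\<^bsub>?R\<^esub> huv \<otimes>\<^bsub>?R\<^esub> bu) \<otimes>\<^bsub>?R\<^esub> M \<otimes>\<^bsub>?R\<^esub> Bv)"
    using cR by (simp add: rs)
  have e12: "(\<one>\<^bsub>?R\<^esub> \<ominus>\<^bsub>?R\<^esub> huv) \<otimes>\<^bsub>?R\<^esub> (bu \<otimes>\<^bsub>?R\<^esub> M \<otimes>\<^bsub>?R\<^esub> Bu) \<oplus>\<^bsub>?R\<^esub> huu \<otimes>\<^bsub>?R\<^esub> (\<one>\<^bsub>?R\<^esub> \<oplus>\<^bsub>?R\<^esub> bv \<otimes>\<^bsub>?R\<^esub> M \<otimes>\<^bsub>?R\<^esub> Bu) =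
     huu \<oplus>\<^bsub>?R\<^esub> (bu \<oplus>\<^bsub>?R\<^esub> huu \<otimes>\<^bsub>?R\<^esub> bv \<ominus>\<^bsub>?R\<^esub> huv \<otimes>\<^bsub>?R\<^esub> bu) \<otimes>\<^bsub>?R\<^esub> M \<otimes>\<^bsub>?R\<^esub> Bu"
    using cR by (simp add: rs)
  have e21: "(\<ominus>\<^bsub>?R\<^esub> hvv) \<otimes>\<^bsub>?R\<^esub> (\<one>\<^bsub>?R\<^esub> \<ominus>\<^bsub>?R\<^esub> bu \<otimes>\<^bsub>?R\<^esub> M \<otimes>\<^bsub>?R\<^esub> Bv) \<oplus>\<^bsub>?R\<^esub> (\<one>\<^bsub>?R\<^esub> \<oplus>\<^bsub>?R\<^esub> hvu) \<otimes>\<^bsub>?R\<^esub> (\<ominus>\<^bsub>?R\<^esub> (bv \<otimes>\<^bsub>?R\<^esub> M \<otimes>\<^bsub>?R\<^esub> Bv)) =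
     \<ominus>\<^bsub>?R\<^esub> (hvv \<oplus>\<^bsub>?R\<^esub> (bv \<oplus>\<^bsub>?R\<^esub> hvu \<otimes>\<^bsub>?R\<^esub> bv \<ominus>\<^bsub>?R\<^esub> hvv \<otimes>\<^bsub>?R\<^esub> bu) \<otimes>\<^bsub>?R\<^esub> M \<otimes>\<^bsub>?R\<^esub> Bv)"
    using cR by (simp add: rs)
  have e22: "(\<ominus>\<^bsub>?R\<^esub> hvv) \<otimes>\<^bsub>?R\<^esub> (bu \<otimes>\<^bsub>?R\<^esub> M \<otimes>\<^bsub>?R\<^esub> Bu) \<oplus>\<^bsub>?R\<^esub> (\<one>\<^bsub>?R\<^esub> \<oplus>\<^bsub>?R\<^esub> hvu) \<otimes>\<^bsub>?R\<^esub> (\<one>\<^bsub>?R\<^esub> \<oplus>\<^bsub>?R\<^esub> bv \<otimes>\<^bsub>?R\<^esub> M \<otimes>\<^bsub>?R\<^esub> Bu) =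
     \<one>\<^bsub>?R\<^esub> \<oplus>\<^bsub>?R\<^esub> (hvu \<oplus>\<^bsub>?R\<^esub> (bv \<oplus>\<^bsub>?R\<^esub> hvu \<otimes>\<^bsub>?R\<^esub> bv \<ominus>\<^bsub>?R\<^esub> hvv \<otimes>\<^bsub>?R\<^esub> bu) \<otimes>\<^bsub>?R\<^esub> M \<otimes>\<^bsub>?R\<^esub> Bu)"
    using cR by (simp add: rs)
  have m11: "(1\<^sub>m q - huv) * (1\<^sub>m q - bu*M*Bv) + huu * (-(bv*M*Bv)) = 1\<^sub>m q - (huv + (bu + huu*bv - huv*bu)*M*Bv)"
    using e11 c by (simp add: to_ring ring_mat_simps qq_closed)
  have m12: "(1\<^sub>m q - huv) * (bu*M*Bu) + huu * (1\<^sub>m q + bv*M*Bu) = huu + (bu + huu*bv - huv*bu)*M*Bu"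
    using e12 c by (simp add: to_ring ring_mat_simps qq_closed)
  have m21: "(- hvv) * (1\<^sub>m q - bu*M*Bv) + (1\<^sub>m q + hvu) * (-(bv*M*Bv)) = -(hvv + (bv + hvu*bv - hvv*bu)*M*Bv)"
    using e21 c by (simp add: to_ring ring_mat_simps qq_closed)
  have m22: "(- hvv) * (bu*M*Bu) + (1\<^sub>m q + hvu) * (1\<^sub>m q + bv*M*Bu) = 1\<^sub>m q + (hvu + (bv + hvu*bv - hvv*bu)*M*Bu)"
    using e22 c by (simp add: to_ring ring_mat_simps qq_closed)
  have cc: "1\<^sub>m q - huv \<in> carrier_mat q q" "huu \<in> carrier_mat q q" "-hvv \<in> carrier_mat q q" "1\<^sub>m q + hvu \<in> carrier_mat q q"
    "1\<^sub>m q - bu*M*Bv \<in> carrier_mat q q" "bu*M*Bu \<in> carrier_mat q q" "-(bv*M*Bv) \<in> carrier_mat q q" "1\<^sub>m q + bv*M*Bu \<in> carrier_mat q q"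
    using c by (auto intro!: qq_closed)
  show ?thesis unfolding mult_four_block_mat[OF cc] m11 m12 m21 m22 ..
qed


lemma msmult_add: "dim_row A = dim_row B \<Longrightarrow> dim_col A = dim_col B \<Longrightarrow> c \<cdot>\<^sub>m ((A::complex mat) + B) = c \<cdot>\<^sub>m A + c \<cdot>\<^sub>m B"
  by (rule eq_matI, auto simp: algebra_simps)
lemma msmult_minus: "dim_row A = dim_row B \<Longrightarrow> dim_col A = dim_col B \<Longrightarrow> c \<cdot>\<^sub>m ((A::complex mat) - B) = c \<cdot>\<^sub>m A - c \<cdot>\<^sub>m B"
  by (rule eq_matI, auto simp: algebra_simps)
lemma reorder3: "A \<in> carrier_mat n m \<Longrightarrow> B \<in> carrier_mat n m \<Longrightarrow> C \<in> carrier_mat n m \<Longrightarrow>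
   (A - B) + C = C + A - (B::complex mat)"
  by (rule eq_matI, auto simp: algebra_simps)



locale sctx =
  fixes N N' q :: nat and K T T' F e u v Ra Rw Ra' Rw' K' Y k Ki' W Kh :: "complex mat"
    and a :: real and w :: complex
  assumes K: "K \<in> carrier_mat N N" and T: "T \<in> carrier_mat N N" and T': "T' \<in> carrier_mat N' N'"
    and F: "F \<in> carrier_mat N N'" and e: "e \<in> carrier_mat N q"
    and u: "u \<in> carrier_mat N q" and v: "v \<in> carrier_mat N q"
    and Ra: "Ra \<in> carrier_mat N N" and Rw: "Rw \<in> carrier_mat N N"
    and Ra': "Ra' \<in> carrier_mat N' N'" and Rw': "Rw' \<in> carrier_mat N' N'"
    and herm: "adj_m K = K"
    and dK: "det K \<noteq> 0"
    and K'_def: "K' = adj_m F * K * F" and Y_def: "Y = adj_m F * K * e" and k_def: "k = adj_m e * K * e"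
    and dK': "det K' \<noteq> 0" and Ki'_def: "Ki' = minv K'"
    and W_def: "W = - (adj_m Y * Ki') * adj_m F + adj_m e"
    and Kh_def: "Kh = k - adj_m Y * Ki' * Y"
    and FF: "adj_m F * F = 1\<^sub>m N'" and ee: "adj_m e * e = 1\<^sub>m q" and Fe: "adj_m F * e = 0\<^sub>m N' q"
    and FFee: "F * adj_m F + e * adj_m e = 1\<^sub>m N"
    and Te: "T * e = 0\<^sub>m N q"
    and FT: "adj_m F * T = T' * adj_m F"
    and lyap: "T * K - K * adj_m T = v * adj_m u - u * adj_m v"
    and Ra1: "Ra * (1\<^sub>m N - complex_of_real a \<cdot>\<^sub>m T) = 1\<^sub>m N"
    and Ra2: "(1\<^sub>m N - complex_of_real a \<cdot>\<^sub>m T) * Ra = 1\<^sub>m N"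
    and Rw1: "Rw * (1\<^sub>m N - w \<cdot>\<^sub>m T) = 1\<^sub>m N"
    and Rw2: "(1\<^sub>m N - w \<cdot>\<^sub>m T) * Rw = 1\<^sub>m N"
    and Ra'1: "Ra' * (1\<^sub>m N' - complex_of_real a \<cdot>\<^sub>m T') = 1\<^sub>m N'"
    and Ra'2: "(1\<^sub>m N' - complex_of_real a \<cdot>\<^sub>m T') * Ra' = 1\<^sub>m N'"
    and Rw'1: "Rw' * (1\<^sub>m N' - w \<cdot>\<^sub>m T') = 1\<^sub>m N'"
    and Rw'2: "(1\<^sub>m N' - w \<cdot>\<^sub>m T') * Rw' = 1\<^sub>m N'"
begin

lemma K'c: "K' \<in> carrier_mat N' N'" unfolding K'_def using F K by auto
lemma Yc: "Y \<in> carrier_mat N' q" unfolding Y_def using F K e by auto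
lemma kc: "k \<in> carrier_mat q q" unfolding k_def using K e by auto
lemma Ki': "Ki' \<in> carrier_mat N' N'" "K' * Ki' = 1\<^sub>m N'" "Ki' * K' = 1\<^sub>m N'"
  using minv_props[OF K'c dK'] unfolding Ki'_def by auto
lemma Wc: "W \<in> carrier_mat q N" unfolding W_def using Yc Ki' F e
  by (auto intro!: add_carrier_mat uminus_carrier_mat)
lemma Khc: "Kh \<in> carrier_mat q q" unfolding Kh_def using kc Yc Ki' by (auto intro!: minus_carrier_mat)

lemmas cs = K T T' F e u v Ra Rw Ra' Rw' K'c Yc kc Ki'(1) Wc Khc

lemma MK: "minv K \<in> carrier_mat N N" "K * minv K = 1\<^sub>m N" "minv K * K = 1\<^sub>m N"
  using minv_props[OF K dK] by auto

lemmas dms = cs[THEN carrier_matD(1)] cs[THEN carrier_matD(2)]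
  MK(1)[THEN carrier_matD(1)] MK(1)[THEN carrier_matD(2)]

lemma K'herm: "adj_m K' = K'"
  unfolding K'_def using herm by (simp add: malg dms)

lemma Ki'herm: "adj_m Ki' = Ki'"
  unfolding Ki'_def by (rule minv_herm[OF K'c dK' K'herm])

lemma eKF: "adj_m e * K * F = adj_m Y"
  unfolding Y_def using herm by (simp add: malg dms)

lemma FK: "adj_m F * K = K' * adj_m F + Y * adj_m e"
proof -
  have "adj_m F * K = adj_m F * K * (F * adj_m F + e * adj_m e)" using FFee by (simp add: dms)
  also have "\<dots> = adj_m F * K * F * adj_m F + adj_m F * K * e * adj_m e"
    by (simp add: malg dms)
  also have "\<dots> = K' * adj_m F + Y * adj_m e" unfolding K'_def Y_def by (simp add: malg dms)
  finally show ?thesis .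
qed

lemma eK: "adj_m e * K = adj_m Y * adj_m F + k * adj_m e"
proof -
  have "adj_m e * K = adj_m e * K * (F * adj_m F + e * adj_m e)" using FFee by (simp add: dms)
  also have "\<dots> = adj_m e * K * F * adj_m F + adj_m e * K * e * adj_m e"
    by (simp add: malg dms)
  also have "\<dots> = adj_m Y * adj_m F + k * adj_m e" unfolding k_def eKF[symmetric] by (simp add: malg dms)
  finally show ?thesis .
qed

lemma KF: "K * F = F * K' + e * adj_m Y"
proof -
  have "adj_m (adj_m F * K) = adj_m (K' * adj_m F + Y * adj_m e)" using FK by simp
  then show ?thesis using herm K'herm by (simp add: malg dms)
qed

lemma WK: "W * K = Kh * adj_m e"
proof -
  have "W * K = - (adj_m Y * Ki' * (adj_m F * K)) + adj_m e * K"
    unfolding W_def by (simp add: malg dms)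
  also have "\<dots> = - (adj_m Y * (Ki' * K') * adj_m F) - adj_m Y * Ki' * Y * adj_m e + (adj_m Y * adj_m F + k * adj_m e)"
    unfolding FK eK apply (simp add: malg dms) by (rule eq_matI, auto simp: dms)
  also have "\<dots> = - (adj_m Y * adj_m F) - adj_m Y * Ki' * Y * adj_m e + (adj_m Y * adj_m F + k * adj_m e)"
    using Ki' by (simp add: dms)
  also have "\<dots> = k * adj_m e - adj_m Y * Ki' * Y * adj_m e"
    by (rule eq_matI, auto simp: dms)
  also have "\<dots> = Kh * adj_m e" unfolding Kh_def by (simp add: malg dms)
  finally show ?thesis .
qed

lemma We: "W * e = 1\<^sub>m q"
proof -
  have "W * e = - (adj_m Y * Ki' * (adj_m F * e)) + adj_m e * e"
    unfolding W_def by (simp add: malg dms)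
  also have "\<dots> = 1\<^sub>m q" unfolding Fe ee
    by (rule eq_matI, auto simp: dms scalar_prod_def)
  finally show ?thesis .
qed

lemma dKh: "det Kh \<noteq> 0"
proof -
  have "Kh * (adj_m e * minv K * e) = W * K * minv K * e" unfolding WK by (simp add: malg dms)
  also have "\<dots> = W * e" using MK by (simp add: malg dms)
  finally have "Kh * (adj_m e * minv K * e) = 1\<^sub>m q" unfolding We .
  moreover have "adj_m e * minv K * e \<in> carrier_mat q q" using cs MK by (meson adj_carrier mult_carrier_mat)
  ultimately show ?thesis by (intro right_inv_det[OF Khc])
qed

lemma Mh: "minv Kh \<in> carrier_mat q q" "Kh * minv Kh = 1\<^sub>m q" "minv Kh * Kh = 1\<^sub>m q"
  using minv_props[OF Khc dKh] by auto

lemmas dms2 = dms Mh(1)[THEN carrier_matD(1)] Mh(1)[THEN carrier_matD(2)]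

lemma Khherm: "adj_m Kh = Kh"
  unfolding Kh_def k_def using herm Ki'herm by (simp add: malg dms)

lemma Kinv: "minv K = F * Ki' * adj_m F + adj_m W * minv Kh * W"
proof (rule minv_unique[OF K])
  show "F * Ki' * adj_m F + adj_m W * minv Kh * W \<in> carrier_mat N N"
    using cs Mh by (auto intro!: mult_carrier_mat add_carrier_mat)
  have KW: "K * adj_m W = e * Kh"
  proof -
    have "K * adj_m W = adj_m (W * K)" using herm by (simp add: malg dms)
    also have "\<dots> = e * Kh" unfolding WK using Khherm by (simp add: malg dms)
    finally show ?thesis .
  qed
  have "K * (F * Ki' * adj_m F + adj_m W * minv Kh * W) = K * F * Ki' * adj_m F + K * adj_m W * minv Kh * W"
    by (simp add: malg dms2)
  also have "\<dots> = F * (K' * Ki') * adj_m F + e * adj_m Y * Ki' * adj_m F + e * (Kh * minv Kh) * W"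
    unfolding KF KW by (simp add: malg dms2)
  also have "\<dots> = F * adj_m F + e * adj_m Y * Ki' * adj_m F + e * W"
    using Ki' Mh by (simp add: dms2)
  also have "\<dots> = F * adj_m F + e * (adj_m Y * Ki' * adj_m F) + (- (e * (adj_m Y * Ki' * adj_m F)) + e * adj_m e)"
    unfolding W_def by (simp add: malg dms2)
  also have "\<dots> = F * adj_m F + e * adj_m e"
    by (rule eq_matI, auto simp: dms2)
  finally show "K * (F * Ki' * adj_m F + adj_m W * minv Kh * W) = 1\<^sub>m N" unfolding FFee .
qed


lemma Te0: "T * (e * X) = 0\<^sub>m N (dim_col X)" if "dim_row X = q" for X
proof -
  have "T * (e * X) = (T * e) * X" using that by (simp add: malg dms)
  then show ?thesis unfolding Te using that by (simp add: mzero_l)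
qed

lemma TFF: "T * (F * (adj_m F * X)) = T * X" if "dim_row X = N" for X
proof -
  have "T * X = T * ((F * adj_m F + e * adj_m e) * X)" unfolding FFee using that by simp
  also have "\<dots> = T * (F * (adj_m F * X)) + T * (e * (adj_m e * X))"
    using that by (simp add: malg dms)
  also have "\<dots> = T * (F * (adj_m F * X)) + 0\<^sub>m N (dim_col X)"
    using that by (subst Te0, auto simp: dms)
  also have "\<dots> = T * (F * (adj_m F * X))"
    using that by (intro eq_matI, auto simp: dms)
  finally show ?thesis by simp
qed

lemma adjRa: "adj_m Ra = 1\<^sub>m N + complex_of_real a \<cdot>\<^sub>m (adj_m T * adj_m Ra)"
proof -
  have "adj_m (Ra * (1\<^sub>m N - complex_of_real a \<cdot>\<^sub>m T)) = 1\<^sub>m N" unfolding Ra1 by simp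
  then have "adj_m Ra - complex_of_real a \<cdot>\<^sub>m (adj_m T * adj_m Ra) = 1\<^sub>m N"
    by (simp add: malg dms)
  then show ?thesis
    by (rule minus_eq_imp[of _ _ _ N N]) (use cs in \<open>auto intro!: mult_carrier_mat\<close>)
qed

lemma Ra_lin: "Ra - complex_of_real a \<cdot>\<^sub>m (Ra * T) = 1\<^sub>m N"
  using Ra1 by (simp add: malg dms)

lemma WZ: "W * (K * (adj_m T * X)) = 0\<^sub>m q (dim_col X)" if "dim_row X = N" for X
proof -
  have "W * (K * (adj_m T * X)) = (W * K) * adj_m T * X" using that by (simp add: malg dms)
  also have "\<dots> = Kh * adj_m (T * e) * X" unfolding WK using that by (simp add: malg dms)
  also have "\<dots> = 0\<^sub>m q (dim_col X)" unfolding Te using that by (simp add: mzero_l mzero_r dms2)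
  finally show ?thesis .
qed

definition "C = W * Ra * v * adj_m u - W * Ra * u * adj_m v"

lemma Cc: "C \<in> carrier_mat q N" unfolding C_def using cs
  by (auto intro!: minus_carrier_mat mult_carrier_mat)

lemma core: "W * Ra * T * F = C * adj_m Ra * F * Ki'"
proof -
  define Z where "Z = K * (adj_m T * (adj_m Ra * F))"
  have Zc: "Z \<in> carrier_mat N N'" unfolding Z_def using cs by (auto intro!: mult_carrier_mat)
  have a1: "W * (Ra * (T * (K * (adj_m Ra * F)))) =
      W * (Ra * (T * (K * F))) + complex_of_real a \<cdot>\<^sub>m (W * (Ra * (T * Z)))"
    apply (subst adjRa) unfolding Z_def by (simp add: malg dms)
  have a2: "W * (Ra * Z) - complex_of_real a \<cdot>\<^sub>m (W * (Ra * (T * Z))) = W * Z"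
  proof -
    have "W * Z = W * ((Ra - complex_of_real a \<cdot>\<^sub>m (Ra * T)) * Z)" unfolding Ra_lin using Zc by simp
    also have "\<dots> = W * (Ra * Z) - complex_of_real a \<cdot>\<^sub>m (W * (Ra * (T * Z)))"
      using Zc by (simp add: malg dms)
    finally show ?thesis by simp
  qed
  have a3: "W * Z = 0\<^sub>m q N'" unfolding Z_def by (subst WZ, auto simp: dms)
  have "C * adj_m Ra * F = W * Ra * (T * K - K * adj_m T) * adj_m Ra * F"
    unfolding lyap C_def by (simp add: malg dms)
  also have "\<dots> = W * (Ra * (T * (K * (adj_m Ra * F)))) - W * (Ra * Z)"
    unfolding Z_def by (simp add: malg dms)
  also have "\<dots> = W * (Ra * (T * (K * F)))"
    unfolding a1 by (rule cancel1[of _ _ q N']) (use a2 a3 Zc cs in \<open>auto intro!: mult_carrier_mat\<close>)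
  also have "\<dots> = W * Ra * T * F * K'"
    unfolding K'_def by (simp add: malg dms TFF)
  finally have eq: "C * adj_m Ra * F = W * Ra * T * F * K'" .
  have "W * Ra * T * F = W * Ra * T * F * (K' * Ki')" using Ki' by (simp add: dms)
  also have "\<dots> = C * adj_m Ra * F * Ki'" unfolding eq using Ki' by (simp add: malg dms)
  finally show ?thesis .
qed


lemma resolv: "Rw - Ra = (w - complex_of_real a) \<cdot>\<^sub>m (Ra * (T * Rw))"
proof (rule lin2[of "Ra * Rw" w _ _ _ _ N N])
  have "Ra = Ra * ((1\<^sub>m N - w \<cdot>\<^sub>m T) * Rw)" unfolding Rw2 by (simp add: dms)
  also have "\<dots> = Ra * Rw - w \<cdot>\<^sub>m (Ra * (T * Rw))" by (simp add: malg dms)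
  finally show "Ra * Rw - w \<cdot>\<^sub>m (Ra * (T * Rw)) = Ra" by simp
  have "Rw = (Ra * (1\<^sub>m N - complex_of_real a \<cdot>\<^sub>m T)) * Rw" unfolding Ra1 by (simp add: dms)
  also have "\<dots> = Ra * Rw - complex_of_real a \<cdot>\<^sub>m (Ra * (T * Rw))" by (simp add: malg dms)
  finally show "Ra * Rw - complex_of_real a \<cdot>\<^sub>m (Ra * (T * Rw)) = Rw" by simp
qed (use cs in \<open>auto intro!: mult_carrier_mat\<close>)

lemma KL: assumes x: "x \<in> carrier_mat N q"
  shows "W * Rw * x = (w - complex_of_real a) \<cdot>\<^sub>m (C * adj_m Ra * F * Ki' * adj_m F * Rw * x) + W * Ra * x"
proof (rule minus_eq_imp[of _ _ _ q q])
  have dx: "dim_row x = N" "dim_col x = q" using x by auto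
  have "W * Rw * x - W * Ra * x = W * ((Rw - Ra) * x)" using x by (simp add: malg dms)
  also have "\<dots> = (w - complex_of_real a) \<cdot>\<^sub>m (W * (Ra * (T * (Rw * x))))"
    unfolding resolv using x by (simp add: malg dms)
  also have "W * (Ra * (T * (Rw * x))) = W * (Ra * (T * (F * (adj_m F * (Rw * x)))))"
    using x by (simp add: TFF dms)
  also have "\<dots> = (W * Ra * T * F) * adj_m F * Rw * x" using x by (simp add: malg dms)
  also have "\<dots> = C * adj_m Ra * F * Ki' * adj_m F * Rw * x" unfolding core ..
  finally show "W * Rw * x - W * Ra * x = (w - complex_of_real a) \<cdot>\<^sub>m (C * adj_m Ra * F * Ki' * adj_m F * Rw * x)" .
qed (use cs x in \<open>auto intro!: mult_carrier_mat\<close>)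

definition "g x y = adj_m x * adj_m Rw * F * Ki' * adj_m F * Ra * y"

lemma KLadj: assumes x: "x \<in> carrier_mat N q"
  shows "adj_m (W * Rw * x) = (cnj w - complex_of_real a) \<cdot>\<^sub>m (g x u * adj_m (W * Ra * v) - g x v * adj_m (W * Ra * u))
     + adj_m (W * Ra * x)"
proof -
  have "adj_m (W * Rw * x) = adj_m ((w - complex_of_real a) \<cdot>\<^sub>m (C * adj_m Ra * F * Ki' * adj_m F * Rw * x) + W * Ra * x)"
    using KL[OF x] by simp
  also have "\<dots> = (cnj w - complex_of_real a) \<cdot>\<^sub>m (g x u * adj_m (W * Ra * v) - g x v * adj_m (W * Ra * u))
     + adj_m (W * Ra * x)"
    unfolding g_def C_def using x Ki'herm by (simp add: malg dms)
  finally show ?thesis .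
qed

lemma FTlin: "adj_m F * (1\<^sub>m N - c \<cdot>\<^sub>m T) = (1\<^sub>m N' - c \<cdot>\<^sub>m T') * adj_m F"
  using FT by (simp add: malg dms)

lemma RaF: "Ra' * adj_m F = adj_m F * Ra"
proof -
  have "Ra' * adj_m F = Ra' * (adj_m F * ((1\<^sub>m N - complex_of_real a \<cdot>\<^sub>m T) * Ra))" unfolding Ra2 by (simp add: dms)
  also have "\<dots> = Ra' * ((adj_m F * (1\<^sub>m N - complex_of_real a \<cdot>\<^sub>m T)) * Ra)" by (simp add: malg dms)
  also have "\<dots> = (Ra' * (1\<^sub>m N' - complex_of_real a \<cdot>\<^sub>m T')) * adj_m F * Ra" unfolding FTlin by (simp add: malg dms)
  also have "\<dots> = adj_m F * Ra" unfolding Ra'1 by (simp add: dms)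
  finally show ?thesis .
qed

lemma RwF: "Rw' * adj_m F = adj_m F * Rw"
proof -
  have "Rw' * adj_m F = Rw' * (adj_m F * ((1\<^sub>m N - w \<cdot>\<^sub>m T) * Rw))" unfolding Rw2 by (simp add: dms)
  also have "\<dots> = Rw' * ((adj_m F * (1\<^sub>m N - w \<cdot>\<^sub>m T)) * Rw)" by (simp add: malg dms)
  also have "\<dots> = (Rw' * (1\<^sub>m N' - w \<cdot>\<^sub>m T')) * adj_m F * Rw" unfolding FTlin by (simp add: malg dms)
  also have "\<dots> = adj_m F * Rw" unfolding Rw'1 by (simp add: dms)
  finally show ?thesis .
qed

lemma prev: assumes x: "x \<in> carrier_mat N q" and y: "y \<in> carrier_mat N q"
  shows "adj_m (adj_m F * x) * adj_m Rw' * Ki' * Ra' * (adj_m F * y) = g x y"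
proof -
  have "adj_m (adj_m F * x) * adj_m Rw' * Ki' * Ra' * (adj_m F * y)
      = adj_m (Rw' * adj_m F * x) * Ki' * (Ra' * adj_m F * y)" using x y by (simp add: malg dms)
  also have "\<dots> = adj_m (adj_m F * Rw * x) * Ki' * (adj_m F * Ra * y)" unfolding RaF RwF ..
  also have "\<dots> = g x y" unfolding g_def using x y by (simp add: malg dms)
  finally show ?thesis .
qed

lemma Gsplit: assumes x: "x \<in> carrier_mat N q" and y: "y \<in> carrier_mat N q"
  shows "adj_m x * adj_m Rw * minv K * Ra * y = g x y + adj_m (W * Rw * x) * minv Kh * (W * Ra * y)"
  unfolding Kinv g_def using x y by (simp add: malg dms2)


lemma gc: "x \<in> carrier_mat N q \<Longrightarrow> y \<in> carrier_mat N q \<Longrightarrow> g x y \<in> carrier_mat q q"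
  unfolding g_def using cs by (auto intro!: mult_carrier_mat)

definition "za = cnj w - complex_of_real a"

lemma S2: assumes x: "x \<in> carrier_mat N q"
  shows "za \<cdot>\<^sub>m adj_m (W * Rw * x) = za \<cdot>\<^sub>m adj_m (W * Ra * x) + (za \<cdot>\<^sub>m g x u) * (za \<cdot>\<^sub>m adj_m (W * Ra * v))
     - (za \<cdot>\<^sub>m g x v) * (za \<cdot>\<^sub>m adj_m (W * Ra * u))"
proof -
  have g1: "g x u \<in> carrier_mat q q" "g x v \<in> carrier_mat q q" using gc x u v by auto
  have "za \<cdot>\<^sub>m adj_m (W * Rw * x) = (za \<cdot>\<^sub>m g x u) * (za \<cdot>\<^sub>m adj_m (W * Ra * v))
     - (za \<cdot>\<^sub>m g x v) * (za \<cdot>\<^sub>m adj_m (W * Ra * u)) + za \<cdot>\<^sub>m adj_m (W * Ra * x)"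
    unfolding KLadj[OF x] za_def[symmetric] using g1 x
    by (simp add: malg msmult_add msmult_minus dms g1[THEN carrier_matD(1)] g1[THEN carrier_matD(2)])
  also have "\<dots> = za \<cdot>\<^sub>m adj_m (W * Ra * x) + (za \<cdot>\<^sub>m g x u) * (za \<cdot>\<^sub>m adj_m (W * Ra * v))
     - (za \<cdot>\<^sub>m g x v) * (za \<cdot>\<^sub>m adj_m (W * Ra * u))"
  proof (rule reorder3[of _ q q])
    have WRa: "W * Ra \<in> carrier_mat q N" using Wc Ra by (rule mult_carrier_mat)
    have b: "adj_m (W * Ra * v) \<in> carrier_mat q q" "adj_m (W * Ra * u) \<in> carrier_mat q q" "adj_m (W * Ra * x) \<in> carrier_mat q q"
      using mult_carrier_mat[OF WRa v] mult_carrier_mat[OF WRa u] mult_carrier_mat[OF WRa x] by auto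
    show "za \<cdot>\<^sub>m adj_m (W * Ra * x) \<in> carrier_mat q q" using b by simp
    show "za \<cdot>\<^sub>m g x v * (za \<cdot>\<^sub>m adj_m (W * Ra * u)) \<in> carrier_mat q q"
      using g1 b by (meson mult_carrier_mat smult_carrier_mat)
    show "za \<cdot>\<^sub>m g x u * (za \<cdot>\<^sub>m adj_m (W * Ra * v)) \<in> carrier_mat q q"
      using g1 b by (meson mult_carrier_mat smult_carrier_mat)
  qed
  finally show ?thesis .
qed

lemma S1: assumes x: "x \<in> carrier_mat N q" and y: "y \<in> carrier_mat N q"
  shows "za \<cdot>\<^sub>m (adj_m x * adj_m Rw * minv K * Ra * y) = za \<cdot>\<^sub>m g x y +
     (za \<cdot>\<^sub>m adj_m (W * Ra * x) + (za \<cdot>\<^sub>m g x u) * (za \<cdot>\<^sub>m adj_m (W * Ra * v))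
     - (za \<cdot>\<^sub>m g x v) * (za \<cdot>\<^sub>m adj_m (W * Ra * u))) * minv Kh * (W * Ra * y)"
proof -
  have g1: "g x y \<in> carrier_mat q q" using gc x y by auto
  have "za \<cdot>\<^sub>m (adj_m x * adj_m Rw * minv K * Ra * y) = za \<cdot>\<^sub>m g x y + (za \<cdot>\<^sub>m adj_m (W * Rw * x)) * minv Kh * (W * Ra * y)"
    unfolding Gsplit[OF x y] using x y g1
    by (simp add: malg msmult_add dms2 g1[THEN carrier_matD(1)] g1[THEN carrier_matD(2)])
  then show ?thesis unfolding S2[OF x] .
qed

lemma S3: assumes x: "x \<in> carrier_mat N q" and y: "y \<in> carrier_mat N q"
  shows "za \<cdot>\<^sub>m (adj_m (W * Ra * x) * minv Kh * (W * Ra * y)) = (za \<cdot>\<^sub>m adj_m (W * Ra * x)) * minv Kh * (W * Ra * y)"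
  using x y by (simp add: malg dms2)

lemma step: "Uf q za u v (adj_m Rw) (minv K) Ra =
   Uf q za (adj_m F * u) (adj_m F * v) (adj_m Rw') Ki' Ra' * Df q za (W * Ra * u) (W * Ra * v) (minv Kh)"
proof -
  have c: "za \<cdot>\<^sub>m g u v \<in> carrier_mat q q" "za \<cdot>\<^sub>m g u u \<in> carrier_mat q q"
    "za \<cdot>\<^sub>m g v u \<in> carrier_mat q q" "za \<cdot>\<^sub>m g v v \<in> carrier_mat q q"
    "za \<cdot>\<^sub>m adj_m (W * Ra * u) \<in> carrier_mat q q" "za \<cdot>\<^sub>m adj_m (W * Ra * v) \<in> carrier_mat q q"
    "minv Kh \<in> carrier_mat q q" "W * Ra * u \<in> carrier_mat q q" "W * Ra * v \<in> carrier_mat q q"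
    using gc u v cs Mh by (auto intro!: mult_carrier_mat)
  show ?thesis
    unfolding Uf_def Df_def S1[OF u v] S1[OF u u] S1[OF v v] S1[OF v u] prev[OF u v] prev[OF u u] prev[OF v v] prev[OF v u]
      S3[OF u v] S3[OF u u] S3[OF v v] S3[OF v u]
    by (rule four_step[OF c])
qed

end


lemma blockmat_dims[simp]: "dim_row (blockmat q m p B) = m * q" "dim_col (blockmat q m p B) = p * q"
  by (simp_all add: blockmat_def)

lemma blockmat_carrier[simp]: "blockmat q m p B \<in> carrier_mat (m * q) (p * q)"
  by (rule carrier_matI) simp_all

lemma blockmat_carrier1: "blockmat q m 1 B \<in> carrier_mat (m * q) q"
  by (rule carrier_matI) simp_all

lemma blockmat_index[simp]: "i < m * q \<Longrightarrow> k < p * q \<Longrightarrow>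
  blockmat q m p B $$ (i,k) = B (i div q) (k div q) $$ (i mod q, k mod q)"
  by (simp add: blockmat_def)

definition Fm :: "nat \<Rightarrow> nat \<Rightarrow> complex mat" where
  "Fm q j = mat ((j+1)*q) (j*q) (\<lambda>(i,k). if i = k then 1 else 0)"
definition em :: "nat \<Rightarrow> nat \<Rightarrow> complex mat" where
  "em q j = mat ((j+1)*q) q (\<lambda>(i,k). if i = j*q + k then 1 else 0)"

lemma Fm_carrier: "Fm q j \<in> carrier_mat ((j+1)*q) (j*q)" by (simp add: Fm_def)
lemma em_carrier: "em q j \<in> carrier_mat ((j+1)*q) q" by (simp add: em_def)

lemma sum_delta_mult: "finite S \<Longrightarrow> (\<Sum>r\<in>S. (if r = i then 1 else 0) * f r) = (if i \<in> S then f i else (0::complex))"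
proof -
  assume "finite S"
  have h: "(\<lambda>r. (if r = i then 1 else 0) * f r) = (\<lambda>r. if r = i then f r else 0)" by auto
  show ?thesis by (subst h) (simp add: \<open>finite S\<close>)
qed

lemma sum_delta_mult2: "finite S \<Longrightarrow> (\<Sum>r\<in>S. f r * (if r = i then 1 else 0)) = (if i \<in> S then f i else (0::complex))"
  using sum_delta_mult[where S=S and i=i and f=f] by (simp add: mult.commute)

lemma sum_delta_mult': "finite S \<Longrightarrow> (\<Sum>r\<in>S. (if i = r then 1 else 0) * f r) = (if i \<in> S then f i else (0::complex))"
  using sum_delta_mult[where S=S and i=i and f=f] by (simp add: eq_commute[of i])

lemma sum_delta_mult2': "finite S \<Longrightarrow> (\<Sum>r\<in>S. f r * (if i = r then 1 else 0)) = (if i \<in> S then f i else (0::complex))"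
  using sum_delta_mult2[where S=S and i=i and f=f] by (simp add: eq_commute[of i])

lemma cnj_if01[simp]: "cnj (if P then 1 else 0) = (if P then 1 else 0)" by simp

lemma F_left: "dim_row A = (j+1)*q \<Longrightarrow> adj_m (Fm q j) * A = mat (j*q) (dim_col A) (\<lambda>(i,k). A $$ (i,k))"
proof (rule eq_matI)
  fix i k assume "dim_row A = (j+1)*q" "i < dim_row (mat (j*q) (dim_col A) (\<lambda>(i,k). A $$ (i,k)))" "k < dim_col (mat (j * q) (dim_col A) (\<lambda>(i, k). A $$ (i, k)))"
  then show "(adj_m (Fm q j) * A) $$ (i,k) = mat (j*q) (dim_col A) (\<lambda>(i,k). A $$ (i,k)) $$ (i,k)"
    by (simp add: Fm_def scalar_prod_def sum_delta_mult)
qed (auto simp: Fm_def)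


lemma F_right: "dim_col A = (j+1)*q \<Longrightarrow> A * Fm q j = mat (dim_row A) (j*q) (\<lambda>(i,k). A $$ (i,k))"
  by (rule eq_matI) (auto simp: Fm_def scalar_prod_def sum_delta_mult2)

lemma adjF_right: "dim_col A = j*q \<Longrightarrow> A * adj_m (Fm q j) = mat (dim_row A) ((j+1)*q) (\<lambda>(i,k). if k < j*q then A $$ (i,k) else 0)"
  by (rule eq_matI) (auto simp: Fm_def scalar_prod_def sum_delta_mult2 sum_delta_mult2')

lemma e_left: "dim_row A = (j+1)*q \<Longrightarrow> adj_m (em q j) * A = mat q (dim_col A) (\<lambda>(i,k). A $$ (j*q+i,k))"
  by (rule eq_matI) (auto simp: em_def scalar_prod_def sum_delta_mult)

lemma e_right: "dim_col A = (j+1)*q \<Longrightarrow> A * em q j = mat (dim_row A) q (\<lambda>(i,k). A $$ (i,j*q+k))"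
  by (rule eq_matI) (auto simp: em_def scalar_prod_def sum_delta_mult2)

lemma adje_right: "dim_col A = q \<Longrightarrow> A * adj_m (em q j) = mat (dim_row A) ((j+1)*q) (\<lambda>(i,k). if j*q \<le> k then A $$ (i,k - j*q) else 0)"
proof (rule eq_matI)
  fix i k assume A: "dim_col A = q" and i: "i < dim_row (mat (dim_row A) ((j+1)*q) (\<lambda>(i,k). if j*q \<le> k then A $$ (i,k - j*q) else 0))"
    and k: "k < dim_col (mat (dim_row A) ((j+1)*q) (\<lambda>(i,k). if j*q \<le> k then A $$ (i,k - j*q) else 0))"
  have eq: "\<And>r. (k = j*q + r) = (j*q \<le> k \<and> r = k - j*q)" by auto
  have "(A * adj_m (em q j)) $$ (i,k) = (\<Sum>r = 0..<q. A $$ (i,r) * (if r = k - j*q \<and> j*q \<le> k then 1 else 0))"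
    using A i k by (auto simp: em_def scalar_prod_def eq intro!: sum.cong)
  also have "\<dots> = (if j*q \<le> k then A $$ (i,k - j*q) else 0)"
    using k by (cases "j*q \<le> k") (auto simp: sum_delta_mult2 algebra_simps)
  finally show "(A * adj_m (em q j)) $$ (i,k) = mat (dim_row A) ((j+1)*q) (\<lambda>(i,k). if j*q \<le> k then A $$ (i,k - j*q) else 0) $$ (i,k)"
    using i k by simp
qed (auto simp: em_def)

lemma divmod_shift: assumes q: "0 < q"
  shows "((i::nat) div q = r div q + 1 \<and> i mod q = r mod q) = (q \<le> i \<and> r = i - q)"
proof
  assume h: "i div q = r div q + 1 \<and> i mod q = r mod q"
  have "i = q * (i div q) + i mod q" using div_mult_mod_eq[of i q] by (simp add: mult.commute)
  also have "\<dots> = q * (r div q) + r mod q + q" using h by (simp add: algebra_simps)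
  also have "\<dots> = r + q" by simp
  finally show "q \<le> i \<and> r = i - q" by simp
next
  assume h: "q \<le> i \<and> r = i - q"
  then show "i div q = r div q + 1 \<and> i mod q = r mod q"
    using le_div_geq[OF q, of i] le_mod_geq[of q i] by auto
qed

lemma Tm_index: assumes q: "0 < q" and i: "i < (j+1)*q" and r: "r < (j+1)*q"
  shows "Tm q j $$ (i,r) = (if q \<le> i \<and> r = i - q then 1 else 0)"
proof -
  have "Tm q j $$ (i,r) = (if i div q = r div q + 1 \<and> i mod q = r mod q then 1 else 0)"
    unfolding Tm_def using i r q by auto
  then show ?thesis unfolding divmod_shift[OF q] .
qed

lemma Tm_dims[simp]: "dim_row (Tm q j) = (j+1)*q" "dim_col (Tm q j) = (j+1)*q" unfolding Tm_def by simp_all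
lemma Tm_carrier: "Tm q j \<in> carrier_mat ((j+1)*q) ((j+1)*q)" by (rule carrier_matI) simp_all

lemma T_left: assumes q: "0 < q" and A: "dim_row A = (j+1)*q"
  shows "Tm q j * A = mat ((j+1)*q) (dim_col A) (\<lambda>(i,k). if q \<le> i then A $$ (i-q,k) else 0)"
proof (rule eq_matI)
  fix i k assume i: "i < dim_row (mat ((j+1)*q) (dim_col A) (\<lambda>(i,k). if q \<le> i then A $$ (i-q,k) else 0))"
    and k: "k < dim_col (mat ((j+1)*q) (dim_col A) (\<lambda>(i,k). if q \<le> i then A $$ (i-q,k) else 0))"
  have "(Tm q j * A) $$ (i,k) = (\<Sum>r = 0..<(j+1)*q. (if r = i - q \<and> q \<le> i then 1 else 0) * A $$ (r,k))"
    using A i k q by (auto simp: scalar_prod_def Tm_index conj_commute intro!: sum.cong)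
  also have "\<dots> = (if q \<le> i then A $$ (i-q,k) else 0)"
    using i by (cases "q \<le> i") (auto simp: sum_delta_mult)
  finally show "(Tm q j * A) $$ (i,k) = mat ((j+1)*q) (dim_col A) (\<lambda>(i,k). if q \<le> i then A $$ (i-q,k) else 0) $$ (i,k)"
    using i k by simp
qed (auto simp: Tm_def)

lemma adjT_right: assumes q: "0 < q" and A: "dim_col A = (j+1)*q"
  shows "A * adj_m (Tm q j) = mat (dim_row A) ((j+1)*q) (\<lambda>(i,k). if q \<le> k then A $$ (i,k-q) else 0)"
proof (rule eq_matI)
  fix i k assume i: "i < dim_row (mat (dim_row A) ((j+1)*q) (\<lambda>(i,k). if q \<le> k then A $$ (i,k-q) else 0))"
    and k: "k < dim_col (mat (dim_row A) ((j+1)*q) (\<lambda>(i,k). if q \<le> k then A $$ (i,k-q) else 0))"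
  have "(A * adj_m (Tm q j)) $$ (i,k) = (\<Sum>r = 0..<(j+1)*q. A $$ (i,r) * (if r = k - q \<and> q \<le> k then 1 else 0))"
    using A i k q by (auto simp: scalar_prod_def Tm_index Tm_carrier conj_commute intro!: sum.cong)
  also have "\<dots> = (if q \<le> k then A $$ (i,k-q) else 0)"
    using k by (cases "q \<le> k") (auto simp: sum_delta_mult2)
  finally show "(A * adj_m (Tm q j)) $$ (i,k) = mat (dim_row A) ((j+1)*q) (\<lambda>(i,k). if q \<le> k then A $$ (i,k-q) else 0) $$ (i,k)"
    using i k by simp
qed (auto simp: Tm_def)

lemma vm_index: assumes q: "0 < q" and i: "i < (j+1)*q" and c: "c < q"
  shows "vm q j $$ (i,c) = (if i = c then 1 else 0)"
proof -
  have "vm q j $$ (i,c) = (if i div q = 0 then 1\<^sub>m q else 0\<^sub>m q q) $$ (i mod q, c mod q)"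
    unfolding vm_def using i c by auto
  then show ?thesis using q c i by (cases "i < q") (auto simp: div_eq_0_iff)
qed

lemma vm_dims[simp]: "dim_row (vm q j) = (j+1)*q" "dim_col (vm q j) = q" unfolding vm_def by simp_all
lemma vm_carrier: "vm q j \<in> carrier_mat ((j+1)*q) q" by (rule carrier_matI) simp_all

lemma v_left: assumes q: "0 < q" and B: "dim_row B = q"
  shows "vm q j * B = mat ((j+1)*q) (dim_col B) (\<lambda>(i,k). if i < q then B $$ (i,k) else 0)"
proof (rule eq_matI)
  fix i k assume i: "i < dim_row (mat ((j+1)*q) (dim_col B) (\<lambda>(i,k). if i < q then B $$ (i,k) else 0))"
    and k: "k < dim_col (mat ((j+1)*q) (dim_col B) (\<lambda>(i,k). if i < q then B $$ (i,k) else 0))"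
  have "(vm q j * B) $$ (i,k) = (\<Sum>r = 0..<q. (if r = i then 1 else 0) * B $$ (r,k))"
    using B i k q vm_carrier[of q j] by (auto simp: scalar_prod_def vm_index eq_commute[of i] intro!: sum.cong)
  also have "\<dots> = (if i < q then B $$ (i,k) else 0)" by (simp add: sum_delta_mult)
  finally show "(vm q j * B) $$ (i,k) = mat ((j+1)*q) (dim_col B) (\<lambda>(i,k). if i < q then B $$ (i,k) else 0) $$ (i,k)"
    using i k by simp
qed (use vm_carrier[of q j] in auto)

lemma adjv_right: assumes q: "0 < q" and A: "dim_col A = q"
  shows "A * adj_m (vm q j) = mat (dim_row A) ((j+1)*q) (\<lambda>(i,k). if k < q then A $$ (i,k) else 0)"
proof (rule eq_matI)
  fix i k assume i: "i < dim_row (mat (dim_row A) ((j+1)*q) (\<lambda>(i,k). if k < q then A $$ (i,k) else 0))"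
    and k: "k < dim_col (mat (dim_row A) ((j+1)*q) (\<lambda>(i,k). if k < q then A $$ (i,k) else 0))"
  have "(A * adj_m (vm q j)) $$ (i,k) = (\<Sum>r = 0..<q. A $$ (i,r) * (if r = k then 1 else 0))"
    using A i k q vm_carrier[of q j] by (auto simp: scalar_prod_def vm_index eq_commute[of k] intro!: sum.cong)
  also have "\<dots> = (if k < q then A $$ (i,k) else 0)" by (simp add: sum_delta_mult2)
  finally show "(A * adj_m (vm q j)) $$ (i,k) = mat (dim_row A) ((j+1)*q) (\<lambda>(i,k). if k < q then A $$ (i,k) else 0) $$ (i,k)"
    using i k by simp
qed (use vm_carrier[of q j] in auto)


lemma div_sub: assumes "0 < q" "q \<le> (i::nat)"
  shows "(i - q) div q = i div q - 1" "(i - q) mod q = i mod q"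
  using le_div_geq[OF assms] le_mod_geq[OF assms(2)] by auto

lemma div_lt1: "(i::nat) < q \<Longrightarrow> i div q = 0" "i < q \<Longrightarrow> i mod q = i" by auto

lemma div_ge1: "0 < q \<Longrightarrow> q \<le> (i::nat) \<Longrightarrow> 1 \<le> i div q"
  by (simp add: div_greater_zero_iff Suc_le_eq)

lemma div_bound: "(i::nat) < (j+1)*q \<Longrightarrow> i div q \<le> j"
  by (metis Suc_eq_plus1 less_Suc_eq_le less_mult_imp_div_less)

lemma selF:
  "adj_m (Fm q j) * Fm q j = 1\<^sub>m (j*q)"
  "adj_m (em q j) * em q j = 1\<^sub>m q"
  "adj_m (Fm q j) * em q j = 0\<^sub>m (j*q) q"
  "Fm q j * adj_m (Fm q j) + em q j * adj_m (em q j) = 1\<^sub>m ((j+1)*q)"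
proof -
  show "adj_m (Fm q j) * Fm q j = 1\<^sub>m (j*q)"
    by (subst F_left) (auto simp: Fm_def)
  show "adj_m (em q j) * em q j = 1\<^sub>m q"
    by (subst e_left) (auto simp: em_def)
  show "adj_m (Fm q j) * em q j = 0\<^sub>m (j*q) q"
    by (subst F_left) (auto simp: em_def)
  show "Fm q j * adj_m (Fm q j) + em q j * adj_m (em q j) = 1\<^sub>m ((j+1)*q)"
    by (subst adjF_right, simp add: Fm_def, subst adje_right, simp add: em_def, rule eq_matI)
       (auto simp: Fm_def em_def)
qed

lemma Te_gen: assumes q: "0 < q" shows "Tm q j * em q j = 0\<^sub>m ((j+1)*q) q"
proof -
  have "Tm q j * em q j = mat ((j+1)*q) q (\<lambda>(i,k). Tm q j $$ (i, j*q+k))"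
    by (subst e_right) auto
  also have "\<dots> = 0\<^sub>m ((j+1)*q) q"
    by (rule eq_matI) (auto simp: Tm_index[OF q])
  finally show ?thesis .
qed

lemma FT_gen: assumes q: "0 < q" and j: "1 \<le> j"
  shows "adj_m (Fm q j) * Tm q j = Tm q (j-1) * adj_m (Fm q j)"
proof -
  have jj: "j - 1 + 1 = j" using j by simp
  have jjq: "q + (j - Suc 0) * q = j * q" using j by (cases j) auto
  have "adj_m (Fm q j) * Tm q j = mat (j*q) ((j+1)*q) (\<lambda>(i,k). Tm q j $$ (i,k))"
    by (subst F_left) auto
  also have "\<dots> = mat (j*q) ((j+1)*q) (\<lambda>(i,k). if k < j*q then Tm q (j-1) $$ (i,k) else 0)"
  proof (rule eq_matI)
    fix i k assume "i < dim_row (mat (j*q) ((j+1)*q) (\<lambda>(i,k). if k < j*q then Tm q (j-1) $$ (i,k) else 0))"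
      "k < dim_col (mat (j*q) ((j+1)*q) (\<lambda>(i,k). if k < j*q then Tm q (j-1) $$ (i,k) else 0))"
    then have i: "i < j*q" and k: "k < (j+1)*q" by auto
    have i': "i < (j - 1 + 1) * q" using i jj by simp
    show "mat (j*q) ((j+1)*q) (\<lambda>(i,k). Tm q j $$ (i,k)) $$ (i,k) = mat (j*q) ((j+1)*q) (\<lambda>(i,k). if k < j*q then Tm q (j-1) $$ (i,k) else 0) $$ (i,k)"
    proof (cases "k < j*q")
      case True
      then have k': "k < (j - 1 + 1) * q" using jj by simp
      show ?thesis using True i k Tm_index[OF q i' k'] Tm_index[OF q, of i j k] by simp
    next
      case False
      then show ?thesis using i k Tm_index[OF q, of i j k] by auto
    qed
  qed auto
  also have "\<dots> = Tm q (j-1) * adj_m (Fm q j)"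
    by (subst adjF_right) (auto simp: jj jjq)
  finally show ?thesis .
qed


lemma v'_gen: assumes q: "0 < q" and j: "1 \<le> j" shows "adj_m (Fm q j) * vm q j = vm q (j-1)"
proof -
  have jjq: "q + (j - Suc 0) * q = j * q" using j by (cases j) auto
  show ?thesis
  proof (subst F_left, simp, rule eq_matI)
    fix i k assume "i < dim_row (vm q (j - 1))" "k < dim_col (vm q (j - 1))"
    then have i: "i < j*q" and i': "i < (j-1+1)*q" and k: "k < q" using jjq by auto
    show "mat (j * q) (dim_col (vm q j)) (\<lambda>(i, k). vm q j $$ (i, k)) $$ (i, k) = vm q (j - 1) $$ (i, k)"
      using i k vm_index[OF q i' k] vm_index[OF q, of i j k] by auto
  qed (auto simp: jjq)
qed

locale hank =
  fixes q j :: nat and cc U :: "nat \<Rightarrow> complex mat"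
  assumes q: "0 < q"
    and HC: "\<And>m r c. m \<le> 2*j \<Longrightarrow> r < q \<Longrightarrow> c < q \<Longrightarrow> cnj (cc m $$ (c,r)) = cc m $$ (r,c)"
    and HU0: "\<And>r c. r < q \<Longrightarrow> c < q \<Longrightarrow> cnj (U 0 $$ (c,r)) = U 0 $$ (r,c)"
    and HU: "\<And>l r c. 1 \<le> l \<Longrightarrow> l \<le> j \<Longrightarrow> r < q \<Longrightarrow> c < q \<Longrightarrow> U l $$ (r,c) = - (cc (l-1) $$ (r,c))"
begin

abbreviation "KK \<equiv> blockmat q (j+1) (j+1) (\<lambda>l k. cc (l+k))"
abbreviation "uu \<equiv> blockmat q (j+1) 1 (\<lambda>l k. U l)"

lemma herm_gen: "adj_m KK = KK"
proof (rule eq_matI)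
  fix i k assume "i < dim_row KK" "k < dim_col KK"
  then have i: "i < (j+1)*q" and k: "k < (j+1)*q" by auto
  have m: "k div q + i div q \<le> 2*j" using div_bound[OF i] div_bound[OF k] by simp
  show "adj_m KK $$ (i,k) = KK $$ (i,k)"
    using i k HC[OF m, of "i mod q" "k mod q"] q by (simp add: add.commute)
qed auto

lemma lyap_gen: "Tm q j * KK - KK * adj_m (Tm q j) = vm q j * adj_m uu - uu * adj_m (vm q j)"
proof -
  have L: "Tm q j * KK - KK * adj_m (Tm q j) = mat ((j+1)*q) ((j+1)*q) (\<lambda>(i,k).
     (if q \<le> i then KK $$ (i-q,k) else 0) - (if q \<le> k then KK $$ (i,k-q) else 0))"
    by (subst T_left[OF q], simp, subst adjT_right[OF q], simp, rule eq_matI, auto)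
  have R: "vm q j * adj_m uu - uu * adj_m (vm q j) = mat ((j+1)*q) ((j+1)*q) (\<lambda>(i,k).
     (if i < q then cnj (uu $$ (k,i)) else 0) - (if k < q then uu $$ (i,k) else 0))"
    by (subst v_left[OF q], simp, subst adjv_right[OF q], simp, rule eq_matI, auto)
  show ?thesis unfolding L R
  proof (rule eq_matI)
    fix i k assume "i < dim_row (mat ((j+1)*q) ((j+1)*q) (\<lambda>(i,k).
     (if i < q then cnj (uu $$ (k,i)) else 0) - (if k < q then uu $$ (i,k) else 0)))"
      "k < dim_col (mat ((j+1)*q) ((j+1)*q) (\<lambda>(i,k).
     (if i < q then cnj (uu $$ (k,i)) else 0) - (if k < q then uu $$ (i,k) else 0)))"
    then have i: "i < (j+1)*q" and k: "k < (j+1)*q" by auto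
    have bi: "i div q \<le> j" and bk: "k div q \<le> j" using div_bound[OF i] div_bound[OF k] by auto
    have mi: "i mod q < q" "k mod q < q" using q by auto
    show "mat ((j+1)*q) ((j+1)*q) (\<lambda>(i,k).
     (if q \<le> i then KK $$ (i-q,k) else 0) - (if q \<le> k then KK $$ (i,k-q) else 0)) $$ (i,k) =
      mat ((j+1)*q) ((j+1)*q) (\<lambda>(i,k).
     (if i < q then cnj (uu $$ (k,i)) else 0) - (if k < q then uu $$ (i,k) else 0)) $$ (i,k)"
    proof (cases "q \<le> i"; cases "q \<le> k")
      assume a: "q \<le> i" "q \<le> k"
      have "(i - q) div q + k div q = i div q + (k - q) div q"
        using div_sub[OF q a(1)] div_sub[OF q a(2)] div_ge1[OF q a(1)] div_ge1[OF q a(2)] by simp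
      then show ?thesis using a i k div_sub[OF q a(1)] div_sub[OF q a(2)] by auto
    next
      assume a: "q \<le> i" "\<not> q \<le> k"
      have l: "1 \<le> i div q" using div_ge1[OF q a(1)] .
      show ?thesis using a i k div_sub[OF q a(1)] HU[OF l bi mi(1), of k] div_lt1[of k q] by auto
    next
      assume a: "\<not> q \<le> i" "q \<le> k"
      have l: "1 \<le> k div q" using div_ge1[OF q a(2)] .
      have m: "k div q - 1 \<le> 2 * j" using bk by simp
      show ?thesis using a i k div_sub[OF q a(2)] HU[OF l bk mi(2), of i] div_lt1[of i q]
        HC[OF m, of i "k mod q"] by auto
    next
      assume a: "\<not> q \<le> i" "\<not> q \<le> k"
      show ?thesis using a i k HU0[of i k] div_lt1[of i q] div_lt1[of k q] by auto
    qed
  qed auto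
qed


lemma K'_gen: "adj_m (Fm q j) * KK * Fm q j = blockmat q j j (\<lambda>l k. cc (l+k))"
proof -
  have "adj_m (Fm q j) * KK * Fm q j = mat (j*q) (j*q) (\<lambda>(i,k). KK $$ (i,k))"
    by (subst F_left, simp, subst F_right, simp, rule eq_matI, auto)
  also have "\<dots> = blockmat q j j (\<lambda>l k. cc (l+k))"
  proof (rule eq_matI)
    fix i k assume "i < dim_row (blockmat q j j (\<lambda>l k. cc (l+k)))" "k < dim_col (blockmat q j j (\<lambda>l k. cc (l+k)))"
    then have i: "i < j*q" and k: "k < j*q" by auto
    then have "i < (j+1)*q" "k < (j+1)*q" by auto
    then show "mat (j*q) (j*q) (\<lambda>(i,k). KK $$ (i,k)) $$ (i,k) = blockmat q j j (\<lambda>l k. cc (l+k)) $$ (i,k)"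
      using i k by simp
  qed auto
  finally show ?thesis .
qed

lemma Y_gen: "adj_m (Fm q j) * KK * em q j = blockmat q j 1 (\<lambda>l k. cc (j+l))"
proof -
  have "adj_m (Fm q j) * KK * em q j = mat (j*q) q (\<lambda>(i,k). KK $$ (i,j*q+k))"
    by (subst F_left, simp, subst e_right, simp, rule eq_matI, auto)
  also have "\<dots> = blockmat q j 1 (\<lambda>l k. cc (j+l))"
  proof (rule eq_matI)
    fix i k assume "i < dim_row (blockmat q j 1 (\<lambda>l k. cc (j+l)))" "k < dim_col (blockmat q j 1 (\<lambda>l k. cc (j+l)))"
    then have i: "i < j*q" and k: "k < q" by auto
    then have "i < (j+1)*q" "j*q+k < (j+1)*q" by auto
    moreover have "(j*q+k) div q = j" "(j*q+k) mod q = k" using k by auto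
    ultimately show "mat (j*q) q (\<lambda>(i,k). KK $$ (i,j*q+k)) $$ (i,k) = blockmat q j 1 (\<lambda>l k. cc (j+l)) $$ (i,k)"
      using i k by (simp add: add.commute)
  qed auto
  finally show ?thesis .
qed

lemma k_gen: assumes c: "cc (2*j) \<in> carrier_mat q q"
  shows "adj_m (em q j) * KK * em q j = cc (2*j)"
proof -
  have "adj_m (em q j) * KK * em q j = mat q q (\<lambda>(i,k). KK $$ (j*q+i,j*q+k))"
    by (subst e_left, simp, subst e_right, simp, rule eq_matI, auto)
  also have "\<dots> = cc (2*j)"
  proof (rule eq_matI)
    fix i k assume "i < dim_row (cc (2*j))" "k < dim_col (cc (2*j))"
    then have i: "i < q" and k: "k < q" using c by auto
    then have "j*q+i < (j+1)*q" "j*q+k < (j+1)*q" by auto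
    moreover have "(j*q+k) div q = j" "(j*q+k) mod q = k" "(j*q+i) div q = j" "(j*q+i) mod q = i" using i k by auto
    ultimately show "mat q q (\<lambda>(i,k). KK $$ (j*q+i,j*q+k)) $$ (i,k) = cc (2*j) $$ (i,k)"
      using i k by (simp add: mult_2)
  qed (use c in auto)
  finally show ?thesis .
qed

lemma u'_gen: "adj_m (Fm q j) * uu = blockmat q j 1 (\<lambda>l k. U l)"
proof -
  have "adj_m (Fm q j) * uu = mat (j*q) q (\<lambda>(i,k). uu $$ (i,k))"
    by (subst F_left, simp, rule eq_matI, auto)
  also have "\<dots> = blockmat q j 1 (\<lambda>l k. U l)"
    by (rule eq_matI) auto
  finally show ?thesis .
qed

end


lemma prod_list_ones: "(\<forall>x\<in>set xs. f x = 1) \<Longrightarrow> prod_list (map f xs) = (1::complex)"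
  by (induct xs) auto

lemma det_IT: assumes q: "0 < q"
  shows "det (1\<^sub>m ((j+1)*q) - w \<cdot>\<^sub>m Tm q j) = 1"
proof -
  let ?A = "1\<^sub>m ((j+1)*q) - w \<cdot>\<^sub>m Tm q j"
  have c: "?A \<in> carrier_mat ((j+1)*q) ((j+1)*q)" using Tm_carrier by auto
  have "det ?A = prod_list (diag_mat ?A)"
  proof (rule det_lower_triangular[OF _ c])
    fix i k assume "i < k" "k < (j+1)*q"
    then show "?A $$ (i,k) = 0" using Tm_index[OF q, of i j k] Tm_carrier[of q j] by auto
  qed
  also have "\<dots> = 1" unfolding diag_mat_def
    by (rule prod_list_ones) (use q Tm_index[OF q] in auto)
  finally show ?thesis .
qed

lemma Rm_props: assumes q: "0 < q"
  shows "Rm q j w \<in> carrier_mat ((j+1)*q) ((j+1)*q)"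
    "Rm q j w * (1\<^sub>m ((j+1)*q) - w \<cdot>\<^sub>m Tm q j) = 1\<^sub>m ((j+1)*q)"
    "(1\<^sub>m ((j+1)*q) - w \<cdot>\<^sub>m Tm q j) * Rm q j w = 1\<^sub>m ((j+1)*q)"
proof -
  have c: "1\<^sub>m ((j+1)*q) - w \<cdot>\<^sub>m Tm q j \<in> carrier_mat ((j+1)*q) ((j+1)*q)" using Tm_carrier by auto
  note m = minv_props[OF c, unfolded det_IT[OF q]]
  show "Rm q j w \<in> carrier_mat ((j+1)*q) ((j+1)*q)"
    "Rm q j w * (1\<^sub>m ((j+1)*q) - w \<cdot>\<^sub>m Tm q j) = 1\<^sub>m ((j+1)*q)"
    "(1\<^sub>m ((j+1)*q) - w \<cdot>\<^sub>m Tm q j) * Rm q j w = 1\<^sub>m ((j+1)*q)"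
    unfolding Rm_def using m by auto
qed

lemma hcat_eq: assumes A: "A \<in> carrier_mat q (j*q)"
  shows "hcat A (1\<^sub>m q) = A * adj_m (Fm q j) + adj_m (em q j)"
proof -
  have "A * adj_m (Fm q j) = mat q ((j+1)*q) (\<lambda>(i,k). if k < j*q then A $$ (i,k) else 0)"
    using A by (subst adjF_right) auto
  then show ?thesis unfolding hcat_def using A
    by (intro eq_matI) (auto simp: em_def)
qed

lemma pd_sub: assumes pd: "pos_def_mat ((M+1)*q) (blockmat q (M+1) (M+1) (\<lambda>l k. cc (l+k)))"
  and jM: "j \<le> M"
  shows "det (blockmat q (j+1) (j+1) (\<lambda>l k. cc (l+k))) \<noteq> 0"
proof
  let ?Ks = "blockmat q (j+1) (j+1) (\<lambda>l k. cc (l+k))"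
  let ?Kb = "blockmat q (M+1) (M+1) (\<lambda>l k. cc (l+k))"
  let ?n = "(j+1)*q" let ?N = "(M+1)*q"
  have nN: "?n \<le> ?N" using jM by simp
  assume "det ?Ks = 0"
  then obtain v where v: "v \<in> carrier_vec ?n" "v \<noteq> 0\<^sub>v ?n" "?Ks *\<^sub>v v = 0\<^sub>v ?n"
    using det_0_iff_vec_prod_zero[OF blockmat_carrier] by blast
  define v' where "v' = vec ?N (\<lambda>i. if i < ?n then v $ i else 0)"
  have v'c: "v' \<in> carrier_vec ?N" unfolding v'_def by simp
  have v'0: "v' \<noteq> 0\<^sub>v ?N"
  proof
    assume h: "v' = 0\<^sub>v ?N"
    have "v = 0\<^sub>v ?n"
    proof (rule eq_vecI)
      fix i assume "i < dim_vec (0\<^sub>v ?n)"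
      then have i: "i < ?n" by simp
      have iN: "i < ?N" using i nN by linarith
      have "v' $ i = 0" unfolding h using iN by simp
      then show "v $ i = 0\<^sub>v ?n $ i" using i iN unfolding v'_def by simp
    qed (use v in auto)
    with v(2) show False by simp
  qed
  have Kv: "(?Kb *\<^sub>v v') $ i = 0" if i: "i < ?n" for i
  proof -
    have iN: "i < ?N" using i nN by linarith
    have "(?Kb *\<^sub>v v') $ i = (\<Sum>r = 0..<?N. ?Kb $$ (i,r) * v' $ r)"
      using iN v'c by (simp add: scalar_prod_def)
    also have "\<dots> = (\<Sum>r = 0..<?n. ?Kb $$ (i,r) * v' $ r)"
      by (rule sum.mono_neutral_right) (use nN in \<open>auto simp: v'_def\<close>)
    also have "\<dots> = (\<Sum>r = 0..<?n. ?Ks $$ (i,r) * v $ r)"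
    proof (rule sum.cong)
      fix x assume "x \<in> {0..<?n}"
      then have x: "x < ?n" by simp
      then have xN: "x < ?N" using nN by linarith
      have iN: "i < ?N" using i nN by linarith
      show "?Kb $$ (i,x) * v' $ x = ?Ks $$ (i,x) * v $ x" using x xN i iN by (simp add: v'_def)
    qed simp
    also have "\<dots> = (?Ks *\<^sub>v v) $ i" using i v(1) by (simp add: scalar_prod_def)
    also have "\<dots> = 0" using v(3) i by simp
    finally show ?thesis .
  qed
  have "(\<Sum>i<?N. cnj (v' $ i) * (?Kb *\<^sub>v v') $ i) = 0"
  proof (rule sum.neutral, intro ballI)
    fix i assume "i \<in> {..<?N}"
    then show "cnj (v' $ i) * (?Kb *\<^sub>v v') $ i = 0"
      using Kv[of i] by (cases "i < ?n") (auto simp: v'_def)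
  qed
  moreover have "\<forall>v\<in>carrier_vec ?N. v \<noteq> 0\<^sub>v ?N \<longrightarrow>
        (let c = (\<Sum>i<?N. cnj (v $ i) * (?Kb *\<^sub>v v) $ i) in Im c = 0 \<and> Re c > 0)"
    using pd unfolding pos_def_mat_def by blast
  then have "(let c = (\<Sum>i<?N. cnj (v' $ i) * (?Kb *\<^sub>v v') $ i) in Im c = 0 \<and> Re c > 0)"
    using v'c v'0 by blast
  then have "Re (\<Sum>i<?N. cnj (v' $ i) * (?Kb *\<^sub>v v') $ i) > 0" unfolding Let_def by blast
  ultimately show False by simp
qed


lemma herm_entry: assumes "A \<in> carrier_mat q q" "adj_m A = A" "r < q" "c < q"
  shows "cnj (A $$ (c,r)) = A $$ (r,c)"
proof -
  have "adj_m A $$ (r,c) = cnj (A $$ (c,r))" using assms(1,3,4) by simp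
  then have "A $$ (r,c) = cnj (A $$ (c,r))" unfolding assms(2) .
  then show ?thesis by simp
qed


lemma smult_uminus_mat: "c \<cdot>\<^sub>m (- (A::complex mat)) = - (c \<cdot>\<^sub>m A)"
  by (rule eq_matI) auto

lemma one_plus_uminus: "A \<in> carrier_mat q q \<Longrightarrow> 1\<^sub>m q + - (A::complex mat) = 1\<^sub>m q - A"
  by (rule eq_matI) auto
lemma one_minus_uminus: "A \<in> carrier_mat q q \<Longrightarrow> 1\<^sub>m q - - (A::complex mat) = 1\<^sub>m q + A"
  by (rule eq_matI) auto

lemma deven_Df: assumes "X \<in> carrier_mat q q" "P \<in> carrier_mat q q" "Hi \<in> carrier_mat q q"
  shows "four_block_mat (1\<^sub>m q + za \<cdot>\<^sub>m (adj_m (- X) * Hi * P)) (za \<cdot>\<^sub>m (adj_m (- X) * Hi * (- X)))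
     (- (za \<cdot>\<^sub>m (adj_m P * Hi * P))) (1\<^sub>m q - za \<cdot>\<^sub>m (adj_m P * Hi * (- X))) = Df q za X P Hi"
proof -
  have c: "za \<cdot>\<^sub>m (adj_m X * Hi * P) \<in> carrier_mat q q" "za \<cdot>\<^sub>m (adj_m P * Hi * X) \<in> carrier_mat q q"
    using assms by auto
  have f1: "adj_m (- X) * Hi * P = - (adj_m X * Hi * P)" using assms by (simp add: adj_uminus)
  have f2: "adj_m (- X) * Hi * (- X) = adj_m X * Hi * X" using assms by (simp add: adj_uminus)
  have f3: "adj_m P * Hi * (- X) = - (adj_m P * Hi * X)" using assms by (simp add: adj_uminus)
  show ?thesis unfolding Df_def f1 f2 f3
      smult_uminus_mat one_plus_uminus[OF c(1)] one_minus_uminus[OF c(2)] ..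
qed

lemma Uf_base: assumes "X \<in> carrier_mat q q" "Hi \<in> carrier_mat q q"
  shows "Uf q za X (1\<^sub>m q) (adj_m (1\<^sub>m q)) Hi (1\<^sub>m q) = Df q za X (1\<^sub>m q) Hi"
  unfolding Uf_def Df_def using assms by simp

lemma d0_fact: fixes S P11 P12 P21 P22 :: "complex mat"
  assumes c: "S \<in> carrier_mat q q" "P11 \<in> carrier_mat q q" "P12 \<in> carrier_mat q q" "P21 \<in> carrier_mat q q" "P22 \<in> carrier_mat q q"
  shows "four_block_mat (1\<^sub>m q - (P11 + S * P21)) (S + (P12 + S * P22)) (- P21) (1\<^sub>m q + P22) =
    four_block_mat (1\<^sub>m q) S (0\<^sub>m q q) (1\<^sub>m q) * four_block_mat (1\<^sub>m q - P11) P12 (- P21) (1\<^sub>m q + P22)"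
proof -
  interpret R: ring "ring_mat TYPE(complex) q ()" by (rule ring_mat)
  let ?R = "ring_mat TYPE(complex) q ()"
  have cR: "S \<in> carrier ?R" "P11 \<in> carrier ?R" "P12 \<in> carrier ?R" "P21 \<in> carrier ?R" "P22 \<in> carrier ?R"
    using c by (simp_all add: ring_mat_simps)
  note rs = R.r_distr R.l_distr R.m_assoc R.a_ac R.minus_eq R.r_minus R.l_minus R.minus_add R.r_one R.l_one R.minus_minus
    R.l_null R.r_null R.l_zero R.r_zero
  have e11: "\<one>\<^bsub>?R\<^esub> \<otimes>\<^bsub>?R\<^esub> (\<one>\<^bsub>?R\<^esub> \<ominus>\<^bsub>?R\<^esub> P11) \<oplus>\<^bsub>?R\<^esub> S \<otimes>\<^bsub>?R\<^esub> (\<ominus>\<^bsub>?R\<^esub> P21) = \<one>\<^bsub>?R\<^esub> \<ominus>\<^bsub>?R\<^esub> (P11 \<oplus>\<^bsub>?R\<^esub> S \<otimes>\<^bsub>?R\<^esub> P21)"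
    using cR by (simp add: rs)
  have e12: "\<one>\<^bsub>?R\<^esub> \<otimes>\<^bsub>?R\<^esub> P12 \<oplus>\<^bsub>?R\<^esub> S \<otimes>\<^bsub>?R\<^esub> (\<one>\<^bsub>?R\<^esub> \<oplus>\<^bsub>?R\<^esub> P22) = S \<oplus>\<^bsub>?R\<^esub> (P12 \<oplus>\<^bsub>?R\<^esub> S \<otimes>\<^bsub>?R\<^esub> P22)"
    using cR by (simp add: rs)
  have e21: "\<zero>\<^bsub>?R\<^esub> \<otimes>\<^bsub>?R\<^esub> (\<one>\<^bsub>?R\<^esub> \<ominus>\<^bsub>?R\<^esub> P11) \<oplus>\<^bsub>?R\<^esub> \<one>\<^bsub>?R\<^esub> \<otimes>\<^bsub>?R\<^esub> (\<ominus>\<^bsub>?R\<^esub> P21) = \<ominus>\<^bsub>?R\<^esub> P21"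
    using cR by (simp add: rs)
  have e22: "\<zero>\<^bsub>?R\<^esub> \<otimes>\<^bsub>?R\<^esub> P12 \<oplus>\<^bsub>?R\<^esub> \<one>\<^bsub>?R\<^esub> \<otimes>\<^bsub>?R\<^esub> (\<one>\<^bsub>?R\<^esub> \<oplus>\<^bsub>?R\<^esub> P22) = \<one>\<^bsub>?R\<^esub> \<oplus>\<^bsub>?R\<^esub> P22"
    using cR by (simp add: rs)
  have m11: "1\<^sub>m q * (1\<^sub>m q - P11) + S * (- P21) = 1\<^sub>m q - (P11 + S * P21)"
    using e11 c by (simp add: to_ring ring_mat_simps qq_closed)
  have m12: "1\<^sub>m q * P12 + S * (1\<^sub>m q + P22) = S + (P12 + S * P22)"
    using e12 c by (simp add: to_ring ring_mat_simps qq_closed)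
  have m21: "0\<^sub>m q q * (1\<^sub>m q - P11) + 1\<^sub>m q * (- P21) = - P21"
    using e21 c by (simp add: to_ring ring_mat_simps qq_closed)
  have m22: "0\<^sub>m q q * P12 + 1\<^sub>m q * (1\<^sub>m q + P22) = 1\<^sub>m q + P22"
    using e22 c by (simp add: to_ring ring_mat_simps qq_closed)
  have cc: "1\<^sub>m q \<in> carrier_mat q q" "S \<in> carrier_mat q q" "0\<^sub>m q q \<in> carrier_mat q q" "1\<^sub>m q \<in> carrier_mat q q"
    "1\<^sub>m q - P11 \<in> carrier_mat q q" "P12 \<in> carrier_mat q q" "- P21 \<in> carrier_mat q q" "1\<^sub>m q + P22 \<in> carrier_mat q q"
    using c by auto
  show ?thesis unfolding mult_four_block_mat[OF cc] m11 m12 m21 m22 ..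
qed


lemma blk11: "B 0 0 \<in> carrier_mat q q \<Longrightarrow> blockmat q 1 1 B = B 0 0"
  by (rule eq_matI) auto
lemma blk11': "B 0 0 \<in> carrier_mat q q \<Longrightarrow> blockmat q (Suc 0) (Suc 0) B = B 0 0"
  by (rule eq_matI) auto

lemma Tm0: "Tm q 0 = 0\<^sub>m q q"
  unfolding Tm_def by (simp add: blk11')

lemma Rm0: "Rm q 0 w = 1\<^sub>m q"
proof -
  have "1\<^sub>m ((0+1)*q) - w \<cdot>\<^sub>m Tm q 0 = 1\<^sub>m q" unfolding Tm0 by (rule eq_matI) auto
  then show ?thesis unfolding Rm_def by (metis minv_unique one_carrier_mat right_mult_one_mat)
qed

lemma vm0: "vm q 0 = 1\<^sub>m q"
  unfolding vm_def by (simp add: blk11')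

locale mainctx =
  fixes q n :: nat and a b :: real and s :: "nat \<Rightarrow> complex mat"
  assumes q1: "q \<ge> 1" and n1: "n \<ge> 1" and ab: "a < b"
    and sh: "\<And>j. j \<le> 2 * n + 1 \<Longrightarrow> s j \<in> carrier_mat q q \<and> adj_m (s j) = s j"
    and pdH: "pos_def_mat (n * q) (H2 q s a b (n - 1))"
    and pdK: "pos_def_mat ((n + 1) * q) (K1 q s b n)"
begin

lemma q: "0 < q" using q1 by simp

lemma sc: "m \<le> 2*n+1 \<Longrightarrow> s m \<in> carrier_mat q q" using sh by blast
lemma sherm: "m \<le> 2*n+1 \<Longrightarrow> r < q \<Longrightarrow> c < q \<Longrightarrow> cnj (s m $$ (c,r)) = s m $$ (r,c)"
  using sh[of m] herm_entry[of "s m" q r c] by blast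

definition "ccK m = complex_of_real b \<cdot>\<^sub>m s m - s (m + 1)"
definition "UK l = (if l = 0 then s 0 else s l - complex_of_real b \<cdot>\<^sub>m s (l - 1))"

lemma K1_blk: "K1 q s b j = blockmat q (j+1) (j+1) (\<lambda>l k. ccK (l+k))"
  unfolding K1_def ccK_def by simp
lemma ut1_blk: "ut1 q s b j = blockmat q (j+1) 1 (\<lambda>l k. UK l)"
  unfolding ut1_def UK_def by simp

lemma hankK: assumes j: "j \<le> n" shows "hank q j ccK UK"
proof
  show "0 < q" by (rule q)
  fix m r c assume m: "m \<le> 2*j" and r: "r < q" and c: "c < q"
  have m1: "m \<le> 2*n+1" "m+1 \<le> 2*n+1" using m j by auto
  show "cnj (ccK m $$ (c,r)) = ccK m $$ (r,c)"
    unfolding ccK_def using sc[OF m1(1)] sc[OF m1(2)] r c sherm[OF m1(1) r c] sherm[OF m1(2) r c] by simp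
next
  fix r c assume r: "r < q" and c: "c < q"
  show "cnj (UK 0 $$ (c,r)) = UK 0 $$ (r,c)" unfolding UK_def using sherm[of 0 r c] r c by simp
next
  fix l r c assume l: "1 \<le> l" "l \<le> j" and r: "r < q" and c: "c < q"
  have m1: "l \<le> 2*n+1" "l - 1 \<le> 2*n+1" "l - 1 + 1 = l" using l j by auto
  show "UK l $$ (r,c) = - (ccK (l-1) $$ (r,c))"
    unfolding UK_def ccK_def using l sc[OF m1(1)] sc[OF m1(2)] r c m1(3) by simp
qed

lemma detK1: assumes "j \<le> n" shows "det (K1 q s b j) \<noteq> 0"
  using pd_sub[of n q ccK j] pdK assms unfolding K1_blk by simp

lemma odd_step: assumes j: "1 \<le> j" "j \<le> n"
  shows "U2til q s a b j z = U2til q s a b (j - 1) z * dodd q s a b j z"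
proof -
  interpret H: hank q j ccK UK by (rule hankK[OF j(2)])
  have jj: "j - 1 + 1 = j" using j by simp
  have K1c: "K1 q s b j \<in> carrier_mat ((j+1)*q) ((j+1)*q)" unfolding K1_blk by (rule blockmat_carrier)
  have K1'c: "K1 q s b (j-1) \<in> carrier_mat (j*q) (j*q)" unfolding K1_blk jj by (rule blockmat_carrier)
  have dK': "det (K1 q s b (j-1)) \<noteq> 0" using detK1[of "j-1"] j by simp
  have MK': "minv (K1 q s b (j-1)) \<in> carrier_mat (j*q) (j*q)" using minv_props[OF K1'c dK'] by simp
  have Yc: "Yt1 q s b j \<in> carrier_mat (j*q) q" unfolding Yt1_def by (rule blockmat_carrier1)
  have c2j: "ccK (2*j) \<in> carrier_mat q q" unfolding ccK_def using sc[of "2*j"] sc[of "2*j+1"] j by auto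
  have ctx: "sctx ((j+1)*q) (j*q) q (K1 q s b j) (Tm q j) (Tm q (j-1)) (Fm q j) (em q j)
      (ut1 q s b j) (vm q j) (Rm q j a) (Rm q j (cnj z)) (Rm q (j-1) a) (Rm q (j-1) (cnj z))
      (K1 q s b (j-1)) (Yt1 q s b j) (ccK (2*j)) (minv (K1 q s b (j-1))) (row1 q s b j) (K1hat q s b j) a (cnj z)"
  proof (unfold_locales)
    show "K1 q s b j \<in> carrier_mat ((j+1)*q) ((j+1)*q)" by (rule K1c)
    show "Tm q j \<in> carrier_mat ((j+1)*q) ((j+1)*q)" by (rule Tm_carrier)
    show "Tm q (j-1) \<in> carrier_mat (j*q) (j*q)" using Tm_carrier[of q "j-1"] unfolding jj .
    show "Fm q j \<in> carrier_mat ((j+1)*q) (j*q)" by (rule Fm_carrier)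
    show "em q j \<in> carrier_mat ((j+1)*q) q" by (rule em_carrier)
    show "ut1 q s b j \<in> carrier_mat ((j+1)*q) q" unfolding ut1_blk by (rule blockmat_carrier1)
    show "vm q j \<in> carrier_mat ((j+1)*q) q" by (rule vm_carrier)
    show "Rm q j a \<in> carrier_mat ((j+1)*q) ((j+1)*q)" by (rule Rm_props[OF q])
    show "Rm q j (cnj z) \<in> carrier_mat ((j+1)*q) ((j+1)*q)" by (rule Rm_props[OF q])
    show "Rm q (j-1) a \<in> carrier_mat (j*q) (j*q)" using Rm_props(1)[OF q, of "j-1"] unfolding jj .
    show "Rm q (j-1) (cnj z) \<in> carrier_mat (j*q) (j*q)" using Rm_props(1)[OF q, of "j-1"] unfolding jj .
    show "adj_m (K1 q s b j) = K1 q s b j" unfolding K1_blk by (rule H.herm_gen)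
    show "det (K1 q s b j) \<noteq> 0" using detK1 j by simp
    show "K1 q s b (j-1) = adj_m (Fm q j) * K1 q s b j * Fm q j" unfolding K1_blk jj H.K'_gen ..
    show "Yt1 q s b j = adj_m (Fm q j) * K1 q s b j * em q j" unfolding K1_blk H.Y_gen
      unfolding Yt1_def ccK_def by (simp add: add.assoc)
    show "ccK (2*j) = adj_m (em q j) * K1 q s b j * em q j" unfolding K1_blk H.k_gen[OF c2j] ..
    show "det (K1 q s b (j-1)) \<noteq> 0" by (rule dK')
    show "minv (K1 q s b (j-1)) = minv (K1 q s b (j-1))" ..
    show "row1 q s b j = - (adj_m (Yt1 q s b j) * minv (K1 q s b (j-1))) * adj_m (Fm q j) + adj_m (em q j)"
      unfolding row1_def by (rule hcat_eq) (use Yc MK' in auto)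
    show "K1hat q s b j = ccK (2*j) - adj_m (Yt1 q s b j) * minv (K1 q s b (j-1)) * Yt1 q s b j"
      unfolding K1hat_def ccK_def using j by simp
    show "adj_m (Fm q j) * Fm q j = 1\<^sub>m (j*q)" by (rule selF)
    show "adj_m (em q j) * em q j = 1\<^sub>m q" by (rule selF)
    show "adj_m (Fm q j) * em q j = 0\<^sub>m (j*q) q" by (rule selF)
    show "Fm q j * adj_m (Fm q j) + em q j * adj_m (em q j) = 1\<^sub>m ((j+1)*q)" by (rule selF)
    show "Tm q j * em q j = 0\<^sub>m ((j+1)*q) q" by (rule Te_gen[OF q])
    show "adj_m (Fm q j) * Tm q j = Tm q (j-1) * adj_m (Fm q j)" by (rule FT_gen[OF q j(1)])
    show "Tm q j * K1 q s b j - K1 q s b j * adj_m (Tm q j) = vm q j * adj_m (ut1 q s b j) - ut1 q s b j * adj_m (vm q j)"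
      unfolding K1_blk ut1_blk by (rule H.lyap_gen)
  qed (use Rm_props[OF q, of j] Rm_props[OF q, of "j-1", unfolded jj] in auto)
  have za: "sctx.za a (cnj z) = z - complex_of_real a" unfolding sctx.za_def[OF ctx] by simp
  have u': "adj_m (Fm q j) * ut1 q s b j = ut1 q s b (j-1)" unfolding ut1_blk H.u'_gen jj ..
  have v': "adj_m (Fm q j) * vm q j = vm q (j-1)" by (rule v'_gen[OF q j(1)])
  have "U2til q s a b j z = Uf q (sctx.za a (cnj z)) (ut1 q s b j) (vm q j) (adj_m (Rm q j (cnj z))) (minv (K1 q s b j)) (Rm q j a)"
    unfolding za U2til_def Uf_def Let_def ..
  also have "\<dots> = Uf q (sctx.za a (cnj z)) (ut1 q s b (j-1)) (vm q (j-1)) (adj_m (Rm q (j-1) (cnj z))) (minv (K1 q s b (j-1))) (Rm q (j-1) a)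
     * Df q (sctx.za a (cnj z)) (row1 q s b j * Rm q j a * ut1 q s b j) (row1 q s b j * Rm q j a * vm q j) (minv (K1hat q s b j))"
    using sctx.step[OF ctx] unfolding u' v' .
  also have "\<dots> = U2til q s a b (j - 1) z * dodd q s a b j z"
    unfolding za U2til_def Uf_def Df_def dodd_def Let_def Theta1_def Gam1_def using j by simp
  finally show ?thesis .
qed


lemma odd_base: "U2til q s a b 0 z = dodd q s a b 0 z"
proof -
  have K0: "K1 q s b 0 = K1hat q s b 0" unfolding K1_def K1hat_def
    by (rule eq_matI) (use sc[of 0] sc[of 1] in auto)
  have u0: "ut1 q s b 0 = s 0" unfolding ut1_def using sc[of 0] by (simp add: blk11')
  have K0c: "K1hat q s b 0 \<in> carrier_mat q q" unfolding K1hat_def using sc[of 0] sc[of 1] by auto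
  have d: "det (K1hat q s b 0) \<noteq> 0" using detK1[of 0] unfolding K0 by simp
  have Mi: "minv (K1hat q s b 0) \<in> carrier_mat q q" using minv_props[OF K0c d] by simp
  have "U2til q s a b 0 z = Uf q (z - complex_of_real a) (s 0) (1\<^sub>m q) (adj_m (1\<^sub>m q)) (minv (K1hat q s b 0)) (1\<^sub>m q)"
    unfolding U2til_def Uf_def Let_def Rm0 vm0 u0 K0 ..
  also have "\<dots> = Df q (z - complex_of_real a) (s 0) (1\<^sub>m q) (minv (K1hat q s b 0))"
    by (rule Uf_base[OF sc[of 0] Mi]) simp
  also have "\<dots> = dodd q s a b 0 z" unfolding dodd_def Df_def Theta1_def Gam1_def Let_def by simp
  finally show ?thesis .
qed

definition "UH l = (if l = 0 then u20 s a b + complex_of_real a \<cdot>\<^sub>m s 0 else - shat s a b (l - 1))"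
definition "uaH j = u2 q s a b j + complex_of_real a \<cdot>\<^sub>m (vm q j * s 0)"

lemma shat_c: "m + 2 \<le> 2*n+1 \<Longrightarrow> shat s a b m \<in> carrier_mat q q"
  unfolding shat_def using sc[of m] sc[of "m+1"] sc[of "m+2"] by auto

lemma H2_blk: "H2 q s a b j = blockmat q (j+1) (j+1) (\<lambda>l k. shat s a b (l+k))"
  unfolding H2_def ..

lemma hankH: assumes j: "j + 1 \<le> n" shows "hank q j (shat s a b) UH"
proof
  show "0 < q" by (rule q)
  fix m r c assume m: "m \<le> 2*j" and r: "r < q" and c: "c < q"
  have m1: "m \<le> 2*n+1" "m+1 \<le> 2*n+1" "m+2 \<le> 2*n+1" using m j by auto
  show "cnj (shat s a b m $$ (c,r)) = shat s a b m $$ (r,c)"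
    unfolding shat_def using sc[OF m1(1)] sc[OF m1(2)] sc[OF m1(3)] r c
      sherm[OF m1(1) r c] sherm[OF m1(2) r c] sherm[OF m1(3) r c] by simp
next
  fix r c assume r: "r < q" and c: "c < q"
  show "cnj (UH 0 $$ (c,r)) = UH 0 $$ (r,c)" unfolding UH_def u20_def
    using sherm[of 0 r c] sherm[of 1 r c] sc[of 0] sc[of 1] r c by simp
next
  fix l r c assume l: "1 \<le> l" "l \<le> j" and r: "r < q" and c: "c < q"
  have "l - 1 + 2 \<le> 2*n+1" using l j by auto
  then show "UH l $$ (r,c) = - (shat s a b (l-1) $$ (r,c))"
    unfolding UH_def using l shat_c[of "l-1"] r c by simp
qed

lemma uaH_blk: assumes j: "j + 1 \<le> n" shows "uaH j = blockmat q (j+1) 1 (\<lambda>l k. UH l)"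
proof (rule eq_matI)
  fix i k assume "i < dim_row (blockmat q (j+1) 1 (\<lambda>l k. UH l))" "k < dim_col (blockmat q (j+1) 1 (\<lambda>l k. UH l))"
  then have i: "i < (j+1)*q" and k: "k < q" by auto
  have vs: "vm q j * s 0 = mat ((j+1)*q) q (\<lambda>(i,k). if i < q then s 0 $$ (i,k) else 0)"
    using v_left[OF q, of "s 0" j] sc[of 0] by simp
  show "uaH j $$ (i,k) = blockmat q (j+1) 1 (\<lambda>l k. UH l) $$ (i,k)"
  proof (cases "i < q")
    case True
    then show ?thesis unfolding uaH_def vs u2_def UH_def u20_def using i k sc[of 0] sc[of 1] by simp
  next
    case False
    have "i div q - 1 + 2 \<le> 2*n+1" using div_bound[OF i] j by auto
    then show ?thesis unfolding uaH_def vs u2_def UH_def using i k False shat_c[of "i div q - 1"] q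
      by (simp add: div_eq_0_iff)
  qed
qed (use sc[of 0] in \<open>auto simp: uaH_def u2_def\<close>)

lemma detH2: assumes "j + 1 \<le> n" shows "det (H2 q s a b j) \<noteq> 0"
proof -
  have nn: "n - 1 + 1 = n" using n1 by simp
  have pd: "pos_def_mat ((n-1+1)*q) (blockmat q (n-1+1) (n-1+1) (\<lambda>l k. shat s a b (l+k)))"
    using pdH unfolding H2_blk nn .
  show ?thesis using pd_sub[OF pd, of j] assms unfolding H2_blk by simp
qed

definition "Vh j z = Uf q (z - complex_of_real a) (uaH j) (vm q j) (adj_m (Rm q j (cnj z))) (minv (H2 q s a b j)) (Rm q j a)"

lemma U2hat_d0: assumes j: "j + 1 \<le> n" shows "U2hat q s a b j z = d0 q s a z * Vh j z"
proof -
  let ?za = "z - complex_of_real a"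
  let ?Rs = "adj_m (Rm q j (cnj z))" let ?Hi = "minv (H2 q s a b j)" let ?Ra = "Rm q j a"
  let ?v = "vm q j" let ?u = "u2 q s a b j" let ?ua = "uaH j" let ?s = "s 0"
  have Hc: "H2 q s a b j \<in> carrier_mat ((j+1)*q) ((j+1)*q)" unfolding H2_blk by (rule blockmat_carrier)
  have Hi: "?Hi \<in> carrier_mat ((j+1)*q) ((j+1)*q)" using minv_props[OF Hc detH2[OF j]] by simp
  have uc: "?u \<in> carrier_mat ((j+1)*q) q" unfolding u2_def by (rule blockmat_carrier1)
  have uac: "?ua \<in> carrier_mat ((j+1)*q) q" unfolding uaH_blk[OF j] by (rule blockmat_carrier1)
  have Rsc: "?Rs \<in> carrier_mat ((j+1)*q) ((j+1)*q)" using Rm_props(1)[OF q] by simp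
  have Rac: "?Ra \<in> carrier_mat ((j+1)*q) ((j+1)*q)" using Rm_props(1)[OF q] by simp
  have Rwc: "Rm q j (cnj z) \<in> carrier_mat ((j+1)*q) ((j+1)*q)" using Rm_props(1)[OF q] by simp
  have vc: "?v \<in> carrier_mat ((j+1)*q) q" by (rule vm_carrier)
  have s0: "?s \<in> carrier_mat q q" "adj_m ?s = ?s" using sh[of 0] by auto
  note cs = Hi uc uac Rsc Rac Rwc vc s0(1)
  note dms = cs[THEN carrier_matD(1)] cs[THEN carrier_matD(2)]
  have aua: "adj_m ?ua = adj_m ?u + complex_of_real a \<cdot>\<^sub>m (?s * adj_m ?v)"
    unfolding uaH_def using s0 by (simp add: malg dms)
  have w: "adj_m ?u + z \<cdot>\<^sub>m (?s * adj_m ?v) = adj_m ?ua + ?za \<cdot>\<^sub>m (?s * adj_m ?v)"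
    unfolding aua by (rule eq_matI) (auto simp: dms algebra_simps)
  define P11 where "P11 = ?za \<cdot>\<^sub>m (adj_m ?ua * ?Rs * ?Hi * ?Ra * ?v)"
  define P12 where "P12 = ?za \<cdot>\<^sub>m (adj_m ?ua * ?Rs * ?Hi * ?Ra * ?ua)"
  define P21 where "P21 = ?za \<cdot>\<^sub>m (adj_m ?v * ?Rs * ?Hi * ?Ra * ?v)"
  define P22 where "P22 = ?za \<cdot>\<^sub>m (adj_m ?v * ?Rs * ?Hi * ?Ra * ?ua)"
  define S where "S = ?za \<cdot>\<^sub>m ?s"
  have r1: "?za \<cdot>\<^sub>m ((adj_m ?ua + ?za \<cdot>\<^sub>m (?s * adj_m ?v)) * ?Rs * ?Hi * ?Ra * ?v) = P11 + S * P21"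
    unfolding P11_def P21_def S_def by (simp add: malg msmult_add dms)
  have r2: "?za \<cdot>\<^sub>m (?s + (adj_m ?ua + ?za \<cdot>\<^sub>m (?s * adj_m ?v)) * ?Rs * ?Hi * ?Ra * ?ua) = S + (P12 + S * P22)"
    unfolding P12_def P22_def S_def by (simp add: malg msmult_add dms)
  have c: "S \<in> carrier_mat q q" "P11 \<in> carrier_mat q q" "P12 \<in> carrier_mat q q" "P21 \<in> carrier_mat q q" "P22 \<in> carrier_mat q q"
    unfolding S_def P11_def P12_def P21_def P22_def using cs by (auto intro!: mult_carrier_mat)
  have "U2hat q s a b j z = four_block_mat (1\<^sub>m q - (P11 + S * P21)) (S + (P12 + S * P22)) (- P21) (1\<^sub>m q + P22)"
    unfolding U2hat_def Let_def uaH_def[symmetric] w r1 r2 P21_def P22_def ..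
  also have "\<dots> = four_block_mat (1\<^sub>m q) S (0\<^sub>m q q) (1\<^sub>m q) * four_block_mat (1\<^sub>m q - P11) P12 (- P21) (1\<^sub>m q + P22)"
    by (rule d0_fact[OF c])
  also have "\<dots> = d0 q s a z * Vh j z"
    unfolding d0_def Vh_def Uf_def S_def P11_def P12_def P21_def P22_def ..
  finally show ?thesis .
qed


lemma even_step: assumes j: "1 \<le> j" "j + 1 \<le> n"
  shows "Vh j z = Vh (j - 1) z * deven q s a b j z"
proof -
  interpret H: hank q j "shat s a b" UH by (rule hankH[OF j(2)])
  have jj: "j - 1 + 1 = j" using j by simp
  have Hc: "H2 q s a b j \<in> carrier_mat ((j+1)*q) ((j+1)*q)" unfolding H2_blk by (rule blockmat_carrier)
  have H'c: "H2 q s a b (j-1) \<in> carrier_mat (j*q) (j*q)" unfolding H2_blk jj by (rule blockmat_carrier)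
  have dH': "det (H2 q s a b (j-1)) \<noteq> 0" using detH2[of "j-1"] j by simp
  have MH': "minv (H2 q s a b (j-1)) \<in> carrier_mat (j*q) (j*q)" using minv_props[OF H'c dH'] by simp
  have Yc: "Y2 q s a b j \<in> carrier_mat (j*q) q" unfolding Y2_def by (rule blockmat_carrier1)
  have c2j: "shat s a b (2*j) \<in> carrier_mat q q" using shat_c[of "2*j"] j by auto
  have ctx: "sctx ((j+1)*q) (j*q) q (H2 q s a b j) (Tm q j) (Tm q (j-1)) (Fm q j) (em q j)
      (uaH j) (vm q j) (Rm q j a) (Rm q j (cnj z)) (Rm q (j-1) a) (Rm q (j-1) (cnj z))
      (H2 q s a b (j-1)) (Y2 q s a b j) (shat s a b (2*j)) (minv (H2 q s a b (j-1))) (row2 q s a b j) (H2hat q s a b j) a (cnj z)"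
  proof (unfold_locales)
    show "H2 q s a b j \<in> carrier_mat ((j+1)*q) ((j+1)*q)" by (rule Hc)
    show "Tm q j \<in> carrier_mat ((j+1)*q) ((j+1)*q)" by (rule Tm_carrier)
    show "Tm q (j-1) \<in> carrier_mat (j*q) (j*q)" using Tm_carrier[of q "j-1"] unfolding jj .
    show "Fm q j \<in> carrier_mat ((j+1)*q) (j*q)" by (rule Fm_carrier)
    show "em q j \<in> carrier_mat ((j+1)*q) q" by (rule em_carrier)
    show "uaH j \<in> carrier_mat ((j+1)*q) q" unfolding uaH_blk[OF j(2)] by (rule blockmat_carrier1)
    show "vm q j \<in> carrier_mat ((j+1)*q) q" by (rule vm_carrier)
    show "Rm q j a \<in> carrier_mat ((j+1)*q) ((j+1)*q)" by (rule Rm_props[OF q])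
    show "Rm q j (cnj z) \<in> carrier_mat ((j+1)*q) ((j+1)*q)" by (rule Rm_props[OF q])
    show "Rm q (j-1) a \<in> carrier_mat (j*q) (j*q)" using Rm_props(1)[OF q, of "j-1"] unfolding jj .
    show "Rm q (j-1) (cnj z) \<in> carrier_mat (j*q) (j*q)" using Rm_props(1)[OF q, of "j-1"] unfolding jj .
    show "adj_m (H2 q s a b j) = H2 q s a b j" unfolding H2_blk by (rule H.herm_gen)
    show "det (H2 q s a b j) \<noteq> 0" using detH2 j by simp
    show "H2 q s a b (j-1) = adj_m (Fm q j) * H2 q s a b j * Fm q j" unfolding H2_blk jj H.K'_gen ..
    show "Y2 q s a b j = adj_m (Fm q j) * H2 q s a b j * em q j" unfolding H2_blk H.Y_gen
      unfolding Y2_def ..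
    show "shat s a b (2*j) = adj_m (em q j) * H2 q s a b j * em q j" unfolding H2_blk H.k_gen[OF c2j] ..
    show "det (H2 q s a b (j-1)) \<noteq> 0" by (rule dH')
    show "minv (H2 q s a b (j-1)) = minv (H2 q s a b (j-1))" ..
    show "row2 q s a b j = - (adj_m (Y2 q s a b j) * minv (H2 q s a b (j-1))) * adj_m (Fm q j) + adj_m (em q j)"
      unfolding row2_def by (rule hcat_eq) (use Yc MH' in auto)
    show "H2hat q s a b j = shat s a b (2*j) - adj_m (Y2 q s a b j) * minv (H2 q s a b (j-1)) * Y2 q s a b j"
      unfolding H2hat_def using j by simp
    show "adj_m (Fm q j) * Fm q j = 1\<^sub>m (j*q)" by (rule selF)
    show "adj_m (em q j) * em q j = 1\<^sub>m q" by (rule selF)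
    show "adj_m (Fm q j) * em q j = 0\<^sub>m (j*q) q" by (rule selF)
    show "Fm q j * adj_m (Fm q j) + em q j * adj_m (em q j) = 1\<^sub>m ((j+1)*q)" by (rule selF)
    show "Tm q j * em q j = 0\<^sub>m ((j+1)*q) q" by (rule Te_gen[OF q])
    show "adj_m (Fm q j) * Tm q j = Tm q (j-1) * adj_m (Fm q j)" by (rule FT_gen[OF q j(1)])
    show "Tm q j * H2 q s a b j - H2 q s a b j * adj_m (Tm q j) = vm q j * adj_m (uaH j) - uaH j * adj_m (vm q j)"
      unfolding H2_blk uaH_blk[OF j(2)] by (rule H.lyap_gen)
  qed (use Rm_props[OF q, of j] Rm_props[OF q, of "j-1", unfolded jj] in auto)
  have za: "sctx.za a (cnj z) = z - complex_of_real a" unfolding sctx.za_def[OF ctx] by simp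
  have j1: "j - 1 + 1 \<le> n" using j by simp
  have u': "adj_m (Fm q j) * uaH j = uaH (j-1)" unfolding uaH_blk[OF j(2)] uaH_blk[OF j1] H.u'_gen jj ..
  have v': "adj_m (Fm q j) * vm q j = vm q (j-1)" by (rule v'_gen[OF q j(1)])
  have Xc: "row2 q s a b j * Rm q j a * uaH j \<in> carrier_mat q q"
    "row2 q s a b j * Rm q j a * vm q j \<in> carrier_mat q q"
    using sctx.cs[OF ctx] by (auto intro!: mult_carrier_mat)
  have Mc: "minv (H2hat q s a b j) \<in> carrier_mat q q" by (rule sctx.Mh(1)[OF ctx])
  have "Vh j z = Uf q (sctx.za a (cnj z)) (uaH j) (vm q j) (adj_m (Rm q j (cnj z))) (minv (H2 q s a b j)) (Rm q j a)"
    unfolding za Vh_def ..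
  also have "\<dots> = Uf q (sctx.za a (cnj z)) (uaH (j-1)) (vm q (j-1)) (adj_m (Rm q (j-1) (cnj z))) (minv (H2 q s a b (j-1))) (Rm q (j-1) a)
     * Df q (sctx.za a (cnj z)) (row2 q s a b j * Rm q j a * uaH j) (row2 q s a b j * Rm q j a * vm q j) (minv (H2hat q s a b j))"
    using sctx.step[OF ctx] unfolding u' v' .
  also have "\<dots> = Vh (j - 1) z * deven q s a b j z"
    unfolding za Vh_def deven_Df[OF Xc Mc, symmetric]
    unfolding deven_def Let_def P2_def Q2_def uaH_def using j by simp
  finally show ?thesis .
qed

lemma even_base: "Vh 0 z = deven q s a b 0 z"
proof -
  have H0: "H2 q s a b 0 = H2hat q s a b 0" unfolding H2_def H2hat_def
    by (rule eq_matI) (use shat_c[of 0] n1 in auto)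
  have H0c: "H2hat q s a b 0 \<in> carrier_mat q q" unfolding H2hat_def using shat_c[of 0] n1 by auto
  have d: "det (H2hat q s a b 0) \<noteq> 0" using detH2[of 0] n1 unfolding H0 by simp
  have Mi: "minv (H2hat q s a b 0) \<in> carrier_mat q q" using minv_props[OF H0c d] by simp
  have u2c: "u20 s a b \<in> carrier_mat q q" unfolding u20_def using sc[of 0] sc[of 1] by auto
  have ua0: "uaH 0 = u20 s a b + complex_of_real a \<cdot>\<^sub>m s 0" unfolding uaH_def vm0
    by (rule eq_matI) (use sc[of 0] u2c in \<open>auto simp: u2_def\<close>)
  have Xc: "u20 s a b + complex_of_real a \<cdot>\<^sub>m s 0 \<in> carrier_mat q q" using sc[of 0] u2c by auto
  have "Vh 0 z = Uf q (z - complex_of_real a) (u20 s a b + complex_of_real a \<cdot>\<^sub>m s 0) (1\<^sub>m q) (adj_m (1\<^sub>m q)) (minv (H2hat q s a b 0)) (1\<^sub>m q)"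
    unfolding Vh_def Rm0 vm0 ua0 H0 ..
  also have "\<dots> = Df q (z - complex_of_real a) (u20 s a b + complex_of_real a \<cdot>\<^sub>m s 0) (1\<^sub>m q) (minv (H2hat q s a b 0))"
    by (rule Uf_base[OF Xc Mi])
  also have "\<dots> = deven q s a b 0 z"
    unfolding deven_Df[OF Xc one_carrier_mat Mi, symmetric]
    unfolding deven_def Let_def P2_def Q2_def by simp
  finally show ?thesis .
qed


lemma d0_carrier: "d0 q s a z \<in> carrier_mat (q+q) (q+q)"
  unfolding d0_def by (rule four_block_carrier_mat) auto

lemma Vh_carrier: assumes j: "j + 1 \<le> n" shows "Vh j z \<in> carrier_mat (q+q) (q+q)"
proof -
  have uac: "uaH j \<in> carrier_mat ((j+1)*q) q" unfolding uaH_blk[OF j] by (rule blockmat_carrier1)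
  show ?thesis unfolding Vh_def Uf_def
    by (rule four_block_carrier_mat; rule carrier_matI) (use uac vm_carrier[of q j] in auto)
qed

lemma deven_carrier: assumes j: "j + 1 \<le> n" shows "deven q s a b j z \<in> carrier_mat (q+q) (q+q)"
proof -
  have s0: "dim_row (s 0) = q" "dim_col (s 0) = q" using sc[of 0] by auto
  show ?thesis unfolding deven_def Let_def
    by (rule four_block_carrier_mat; rule carrier_matI) (use s0 in \<open>auto simp: P2_def Q2_def\<close>)
qed

lemma mprod_carrier: "(\<And>k. k \<le> j \<Longrightarrow> f k \<in> carrier_mat m m) \<Longrightarrow> mprod f j \<in> carrier_mat m m"
  by (induct j) auto

lemma even_hat: assumes j: "1 \<le> j" "j + 1 \<le> n"
  shows "U2hat q s a b j z = U2hat q s a b (j - 1) z * deven q s a b j z"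
proof -
  have j1: "j - 1 + 1 \<le> n" using j by simp
  have "U2hat q s a b j z = d0 q s a z * (Vh (j-1) z * deven q s a b j z)"
    unfolding U2hat_d0[OF j(2)] even_step[OF j] ..
  also have "\<dots> = d0 q s a z * Vh (j-1) z * deven q s a b j z"
    using assoc_mult_mat[OF d0_carrier Vh_carrier[OF j1] deven_carrier[OF j(2)]] by simp
  also have "\<dots> = U2hat q s a b (j - 1) z * deven q s a b j z" unfolding U2hat_d0[OF j1] ..
  finally show ?thesis .
qed

lemma final: "U2hat q s a b 0 z = d0 q s a z * deven q s a b 0 z
    \<and> U2til q s a b 0 z = dodd q s a b 0 z
    \<and> (\<forall>j. 1 \<le> j \<and> j \<le> n - 1 \<longrightarrow> U2hat q s a b j z = U2hat q s a b (j - 1) z * deven q s a b j z)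
    \<and> (\<forall>j. 1 \<le> j \<and> j \<le> n \<longrightarrow> U2til q s a b j z = U2til q s a b (j - 1) z * dodd q s a b j z)
    \<and> (\<forall>j. j \<le> n - 1 \<longrightarrow> U2hat q s a b j z = d0 q s a z * mprod (\<lambda>k. deven q s a b k z) j)
    \<and> (\<forall>j. j \<le> n \<longrightarrow> U2til q s a b j z = mprod (\<lambda>k. dodd q s a b k z) j)"
proof (intro conjI allI impI)
  have n0: "0 + 1 \<le> n" using n1 by simp
  show h0: "U2hat q s a b 0 z = d0 q s a z * deven q s a b 0 z"
    unfolding U2hat_d0[OF n0] even_base ..
  show "U2til q s a b 0 z = dodd q s a b 0 z" by (rule odd_base)
  show "U2hat q s a b j z = U2hat q s a b (j - 1) z * deven q s a b j z" if "1 \<le> j \<and> j \<le> n - 1" for j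
  proof -
    have "1 \<le> j" "j + 1 \<le> n" using that n1 by arith+
    then show ?thesis by (rule even_hat)
  qed
  show "U2til q s a b j z = U2til q s a b (j - 1) z * dodd q s a b j z" if "1 \<le> j \<and> j \<le> n" for j
    using odd_step[of j] that by simp
  show "U2hat q s a b j z = d0 q s a z * mprod (\<lambda>k. deven q s a b k z) j" if "j \<le> n - 1" for j
    using that
  proof (induct j)
    case 0
    then show ?case using h0 by simp
  next
    case (Suc j)
    have j: "1 \<le> Suc j" "Suc j + 1 \<le> n" using Suc.prems n1 by auto
    have mc: "mprod (\<lambda>k. deven q s a b k z) j \<in> carrier_mat (q+q) (q+q)"
      by (rule mprod_carrier) (use Suc.prems in \<open>auto intro!: deven_carrier\<close>)
    have "U2hat q s a b (Suc j) z = d0 q s a z * mprod (\<lambda>k. deven q s a b k z) j * deven q s a b (Suc j) z"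
      using even_hat[OF j] Suc by simp
    also have "\<dots> = d0 q s a z * mprod (\<lambda>k. deven q s a b k z) (Suc j)"
      using assoc_mult_mat[OF d0_carrier mc deven_carrier[OF j(2)]] by simp
    finally show ?case .
  qed
  show "U2til q s a b j z = mprod (\<lambda>k. dodd q s a b k z) j" if "j \<le> n" for j
    using that
  proof (induct j)
    case 0
    then show ?case using odd_base by simp
  next
    case (Suc j)
    then show ?case using odd_step[of "Suc j"] by simp
  qed
qed

end

theorem mainTheorem3:
  fixes q n :: nat and a b :: real and s :: "nat \<Rightarrow> complex mat"
  assumes "q \<ge> 1" and "n \<ge> 1" and "a < b"
    and "\<And>j. j \<le> 2 * n + 1 \<Longrightarrow> s j \<in> carrier_mat q q \<and> adj_m (s j) = s j"
    and "pos_def_mat (n * q) (H2 q s a b (n - 1))"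
    and "pos_def_mat ((n + 1) * q) (K1 q s b n)"
  shows "\<forall>z :: complex.
      U2hat q s a b 0 z = d0 q s a z * deven q s a b 0 z
    \<and> U2til q s a b 0 z = dodd q s a b 0 z
    \<and> (\<forall>j. 1 \<le> j \<and> j \<le> n - 1 \<longrightarrow> U2hat q s a b j z = U2hat q s a b (j - 1) z * deven q s a b j z)
    \<and> (\<forall>j. 1 \<le> j \<and> j \<le> n \<longrightarrow> U2til q s a b j z = U2til q s a b (j - 1) z * dodd q s a b j z)
    \<and> (\<forall>j. j \<le> n - 1 \<longrightarrow> U2hat q s a b j z = d0 q s a z * mprod (\<lambda>k. deven q s a b k z) j)
    \<and> (\<forall>j. j \<le> n \<longrightarrow> U2til q s a b j z = mprod (\<lambda>k. dodd q s a b k z) j)"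
proof
  fix z :: complex
  interpret M: mainctx q n a b s
    by (unfold_locales) (use assms in auto)
  show "U2hat q s a b 0 z = d0 q s a z * deven q s a b 0 z
    \<and> U2til q s a b 0 z = dodd q s a b 0 z
    \<and> (\<forall>j. 1 \<le> j \<and> j \<le> n - 1 \<longrightarrow> U2hat q s a b j z = U2hat q s a b (j - 1) z * deven q s a b j z)
    \<and> (\<forall>j. 1 \<le> j \<and> j \<le> n \<longrightarrow> U2til q s a b j z = U2til q s a b (j - 1) z * dodd q s a b j z)
    \<and> (\<forall>j. j \<le> n - 1 \<longrightarrow> U2hat q s a b j z = d0 q s a z * mprod (\<lambda>k. deven q s a b k z) j)
    \<and> (\<forall>j. j \<le> n \<longrightarrow> U2til q s a b j z = mprod (\<lambda>k. dodd q s a b k z) j)"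
    by (rule M.final)
qed


end
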